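(* Let $p>1$ and $b\in\{2,3,\dots\}$. (a) There exists a centered Gaussian process $Y=(Y(t))_{t\in[0,1]}$ such that $\mathbb P$-a.s. $\langle Y\rangle^{(p)}_t=V\,t$ for all $t\in[0,1]$ with a random variable $0<V<\infty$, and such that for every $s\in(0,1)$ the function $t\mapsto c(s,t):=\mathbb E[Y(s)Y(t)]$ satisfies $\langle c(s,\cdot)\rangle^{(p)}_t=C_s t$ for all $t\in[0,1]$ with a constant $C_s\in(0,\infty)$. (b) Let $Y=(Y(t))_{t\in[0,1]}$ be any centered Gaussian process whose sample paths $\mathbb P$-a.s. have finite $p$-th variation $\langle Y\rangle^{(p)}_1<\infty$ along the $b$-adic partitions. Then for every $s\in[0,1]$, with $c(s,t):=\mathbb E[Y(s)Y(t)]$, $$\limsup_{n\to\infty}\sum_{k=0}^{b^n-1}\big|c(s,(k+1)b^{-n})-c(s,kb^{-n})\big|^p<\infty.$$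
   Context: For $f:[0,1]\to\mathbb R$ and $p>0$, the $p$-th variation along the $b$-adic partitions is $\langle f\rangle^{(p)}_t:=\lim_{n\to\infty}\sum_{k=0}^{\lfloor tb^n\rfloor-1}|f((k+1)b^{-n})-f(kb^{-n})|^p$, $t\in[0,1]$, provided the limit exists. *)

theory Defs
  imports "HOL-Probability.Probability"
begin

definition badic_pvar_sum :: "nat \<Rightarrow> real \<Rightarrow> (real \<Rightarrow> real) \<Rightarrow> real \<Rightarrow> nat \<Rightarrow> real" where
  "badic_pvar_sum b p f t n =
     (\<Sum>k<nat \<lfloor>t * real b ^ n\<rfloor>. \<bar>f (real (Suc k) / real b ^ n) - f (real k / real b ^ n)\<bar> powr p)"

definition has_badic_pvar :: "nat \<Rightarrow> real \<Rightarrow> (real \<Rightarrow> real) \<Rightarrow> real \<Rightarrow> real \<Rightarrow> bool" where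
  "has_badic_pvar b p f t v \<longleftrightarrow> (badic_pvar_sum b p f t \<longlonglongrightarrow> v)"

definition centered_gaussian_rv :: "'a measure \<Rightarrow> ('a \<Rightarrow> real) \<Rightarrow> bool" where
  "centered_gaussian_rv M X \<longleftrightarrow> X \<in> borel_measurable M \<and>
     (\<exists>\<sigma>\<ge>0. distr M borel X =
        (if \<sigma> = 0 then return borel 0 else density lborel (normal_density 0 \<sigma>)))"

definition centered_gaussian_process :: "'a measure \<Rightarrow> real set \<Rightarrow> (real \<Rightarrow> 'a \<Rightarrow> real) \<Rightarrow> bool" where
  "centered_gaussian_process M I Y \<longleftrightarrow>
     (\<forall>t\<in>I. Y t \<in> borel_measurable M) \<and>
     (\<forall>F a. finite F \<longrightarrow> F \<subseteq> I \<longrightarrow>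
        centered_gaussian_rv M (\<lambda>\<omega>. \<Sum>t\<in>F. a t * Y t \<omega>))"

end

theory Submission
  imports Defs
begin


lemma crv_moments:
  assumes P: "prob_space M" and G: "centered_gaussian_rv M X"
  obtains \<sigma> where "\<sigma> \<ge> 0" "integrable M (\<lambda>\<omega>. (X \<omega>)^2)" "integral\<^sup>L M (\<lambda>\<omega>. (X \<omega>)^2) = \<sigma>^2"
    "\<sigma> > 0 \<Longrightarrow> (\<forall>r\<ge>0. measure M {\<omega>\<in>space M. \<bar>X \<omega>\<bar> \<le> r} \<le> r / \<sigma>)"
proof -
  from G obtain \<sigma> where Xm[measurable]: "X \<in> borel_measurable M" and s0: "\<sigma> \<ge> 0" and
    D: "distr M borel X = (if \<sigma> = 0 then return borel 0 else density lborel (normal_density 0 \<sigma>))"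
    unfolding centered_gaussian_rv_def by blast
  have int_eq: "integrable M (\<lambda>\<omega>. (X \<omega>)^2) \<longleftrightarrow> integrable (distr M borel X) (\<lambda>x. x^2)"
    by (subst integrable_distr_eq) auto
  have integral_eq: "integral\<^sup>L M (\<lambda>\<omega>. (X \<omega>)^2) = integral\<^sup>L (distr M borel X) (\<lambda>x. x^2)"
    by (subst integral_distr) auto
  show ?thesis
  proof (cases "\<sigma> = 0")
    case True
    then have D0: "distr M borel X = return borel 0" using D by simp
    have "AE x in distr M borel X. x = 0" unfolding D0 by (subst AE_return) auto
    then have A0: "AE \<omega> in M. X \<omega> = 0" by (subst (asm) AE_distr_iff) auto
    then have A1: "AE \<omega> in M. (X \<omega>)^2 = 0" by eventually_elim simp
    have "integrable M (\<lambda>\<omega>. (X \<omega>)^2)"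
      proof (rule integrable_cong_AE_imp[where g="\<lambda>_. 0"])
      show "AE x in M. 0 = (X x)^2" using A1 by eventually_elim simp
    qed auto
    moreover have "integral\<^sup>L M (\<lambda>\<omega>. (X \<omega>)^2) = 0"
      using integral_cong_AE[OF _ _ A1] by simp
    ultimately show ?thesis
      by (intro that[of 0]) auto
  next
    case False
    then have sp: "\<sigma> > 0" using s0 by simp
    then have D1: "distr M borel X = density lborel (normal_density 0 \<sigma>)" using D by simp
    have i1: "integrable M (\<lambda>\<omega>. (X \<omega>)^2)"
      unfolding int_eq D1
      apply (subst integrable_density)
      using integrable_normal_moment[OF sp, of 0 2] by auto
    have i2: "integral\<^sup>L M (\<lambda>\<omega>. (X \<omega>)^2) = \<sigma>^2"
      unfolding integral_eq D1
      apply (subst integral_density)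
      using integral_normal_moment_even[OF sp, of 0 1] by (auto simp: power2_eq_square)
    have i3: "measure M {\<omega>\<in>space M. \<bar>X \<omega>\<bar> \<le> r} \<le> r / \<sigma>" if r: "r \<ge> 0" for r
    proof -
      have "measure M {\<omega>\<in>space M. \<bar>X \<omega>\<bar> \<le> r} = measure (distr M borel X) {-r..r}"
        by (subst measure_distr) (auto intro!: arg_cong[where f="measure M"])
      also have "\<dots> = measure (density lborel (normal_density 0 \<sigma>)) {-r..r}" using D1 by simp
      also have "\<dots> \<le> r / \<sigma>"
      proof -
        have bnd: "normal_density 0 \<sigma> x \<le> 1 / (2 * \<sigma>)" for x
        proof -
          have s1: "sqrt (2 * pi * \<sigma>\<^sup>2) = sqrt (2*pi) * \<sigma>" using sp by (simp add: real_sqrt_mult)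
          have s2: "sqrt (2*pi) \<ge> 2" using pi_gt3 by (simp add: real_le_rsqrt)
          have s3: "sqrt (2 * pi * \<sigma>\<^sup>2) \<ge> 2 * \<sigma>" unfolding s1 using s2 sp by simp
          have e1: "exp (-(x - 0)\<^sup>2/ (2 * \<sigma>\<^sup>2)) \<le> 1" by simp
          have "normal_density 0 \<sigma> x \<le> 1 / sqrt (2 * pi * \<sigma>\<^sup>2) * 1"
            unfolding normal_density_def by (rule mult_left_mono[OF e1]) simp
          also have "\<dots> \<le> 1 / (2 * \<sigma>)" using s3 sp by (simp add: frac_le)
          finally show ?thesis .
        qed
        have "emeasure (density lborel (normal_density 0 \<sigma>)) {-r..r}
              = (\<integral>\<^sup>+x. ennreal (normal_density 0 \<sigma> x) * indicator {-r..r} x \<partial>lborel)"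
          by (subst emeasure_density) auto
        also have "\<dots> \<le> (\<integral>\<^sup>+x. ennreal (1 / (2*\<sigma>)) * indicator {-r..r} x \<partial>lborel)"
          by (intro nn_integral_mono) (auto intro: mult_right_mono ennreal_leI simp: bnd split: split_indicator)
        also have "\<dots> = ennreal (1/(2*\<sigma>)) * ennreal (2*r)"
          using r by (subst nn_integral_cmult_indicator) auto
        also have "\<dots> = ennreal (r / \<sigma>)" using sp r by (simp flip: ennreal_mult)
        finally show ?thesis using sp r by (simp add: measure_def enn2real_leI)
      qed
      finally show ?thesis .
    qed
    show ?thesis by (rule that[of \<sigma>]) (use s0 i1 i2 i3 in auto)
  qed
qed


lemma integrable_prod_sq:
  fixes f g :: "'a \<Rightarrow> real"
  assumes "integrable M (\<lambda>\<omega>. (f \<omega>)^2)" "integrable M (\<lambda>\<omega>. (g \<omega>)^2)"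
    "f \<in> borel_measurable M" "g \<in> borel_measurable M"
  shows "integrable M (\<lambda>\<omega>. f \<omega> * g \<omega>)"
proof (rule Bochner_Integration.integrable_bound[where f="\<lambda>\<omega>. (f \<omega>)^2 + (g \<omega>)^2"])
  show "integrable M (\<lambda>\<omega>. (f \<omega>)^2 + (g \<omega>)^2)" using assms by auto
  show "(\<lambda>\<omega>. f \<omega> * g \<omega>) \<in> borel_measurable M" using assms by auto
  show "AE x in M. norm (f x * g x) \<le> norm ((f x)\<^sup>2 + (g x)\<^sup>2)"
  proof (rule AE_I2)
    fix x
    have "2 * \<bar>f x * g x\<bar> \<le> (f x)\<^sup>2 + (g x)\<^sup>2"
    proof -
      have "0 \<le> (\<bar>f x\<bar> - \<bar>g x\<bar>)^2" by simp
      then show ?thesis by (simp add: power2_eq_square algebra_simps abs_mult)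
    qed
    then show "norm (f x * g x) \<le> norm ((f x)\<^sup>2 + (g x)\<^sup>2)" by simp
  qed
qed

lemma cgp_comb:
  assumes G: "centered_gaussian_process M I Y" and J: "finite J" and tau: "\<tau> ` J \<subseteq> I"
  shows "centered_gaussian_rv M (\<lambda>\<omega>. \<Sum>i\<in>J. c i * Y (\<tau> i) \<omega>)"
proof -
  define a where "a t = (\<Sum>i\<in>{i\<in>J. \<tau> i = t}. c i)" for t
  have eq: "(\<lambda>\<omega>. \<Sum>i\<in>J. c i * Y (\<tau> i) \<omega>) = (\<lambda>\<omega>. \<Sum>t\<in>\<tau> ` J. a t * Y t \<omega>)"
  proof
    fix \<omega>
    have "(\<Sum>i\<in>J. c i * Y (\<tau> i) \<omega>) = (\<Sum>t\<in>\<tau> ` J. \<Sum>i\<in>{i\<in>J. \<tau> i = t}. c i * Y (\<tau> i) \<omega>)"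
      using J by (rule sum.image_gen)
    also have "\<dots> = (\<Sum>t\<in>\<tau> ` J. a t * Y t \<omega>)"
      unfolding a_def sum_distrib_right by (intro sum.cong refl) auto
    finally show "(\<Sum>i\<in>J. c i * Y (\<tau> i) \<omega>) = (\<Sum>t\<in>\<tau> ` J. a t * Y t \<omega>)" .
  qed
  show ?thesis unfolding eq using G J tau unfolding centered_gaussian_process_def by blast
qed

lemma cgp_comb_diff:
  assumes G: "centered_gaussian_process M I Y" and J: "finite J"
    and t1: "\<tau>1 ` J \<subseteq> I" and t2: "\<tau>2 ` J \<subseteq> I"
  shows "centered_gaussian_rv M (\<lambda>\<omega>. \<Sum>i\<in>J. c i * (Y (\<tau>1 i) \<omega> - Y (\<tau>2 i) \<omega>))"
proof -
  define c' where "c' = case_sum c (\<lambda>i. - c i)"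
  define \<tau> where "\<tau> = case_sum \<tau>1 \<tau>2"
  have "centered_gaussian_rv M (\<lambda>\<omega>. \<Sum>i\<in>J <+> J. c' i * Y (\<tau> i) \<omega>)"
    by (rule cgp_comb[OF G]) (use J t1 t2 in \<open>auto simp: \<tau>_def\<close>)
  moreover have "(\<lambda>\<omega>. \<Sum>i\<in>J <+> J. c' i * Y (\<tau> i) \<omega>) = (\<lambda>\<omega>. \<Sum>i\<in>J. c i * (Y (\<tau>1 i) \<omega> - Y (\<tau>2 i) \<omega>))"
  proof
    fix \<omega>
    have "(\<Sum>i\<in>J <+> J. c' i * Y (\<tau> i) \<omega>) = (\<Sum>i\<in>J. c i * Y (\<tau>1 i) \<omega>) + (\<Sum>i\<in>J. - c i * Y (\<tau>2 i) \<omega>)"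
      by (simp add: sum.Plus J c'_def \<tau>_def comp_def)
    also have "\<dots> = (\<Sum>i\<in>J. c i * (Y (\<tau>1 i) \<omega> - Y (\<tau>2 i) \<omega>))"
      by (simp add: right_diff_distrib sum_subtractf sum_negf)
    finally show "(\<Sum>i\<in>J <+> J. c' i * Y (\<tau> i) \<omega>) = (\<Sum>i\<in>J. c i * (Y (\<tau>1 i) \<omega> - Y (\<tau>2 i) \<omega>))" .
  qed
  ultimately show ?thesis by simp
qed

lemma cgp_single:
  assumes G: "centered_gaussian_process M I Y" and t: "t \<in> I"
  shows "centered_gaussian_rv M (Y t)"
proof -
  have A: "\<forall>F a. finite F \<longrightarrow> F \<subseteq> I \<longrightarrow> centered_gaussian_rv M (\<lambda>\<omega>. \<Sum>t\<in>F. a t * Y t \<omega>)"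
    using G unfolding centered_gaussian_process_def by (rule conjunct2)
  have "centered_gaussian_rv M (\<lambda>\<omega>. \<Sum>i\<in>{t}. (\<lambda>_. 1::real) i * Y i \<omega>)"
    using A[rule_format, of "{t}" "\<lambda>_. 1"] t by simp
  then show ?thesis by simp
qed


lemma key_bound:
  fixes M :: "'a measure" and Y :: "real \<Rightarrow> 'a \<Rightarrow> real" and u :: "nat \<Rightarrow> real"
  assumes P: "prob_space M" and G: "centered_gaussian_process M {0..1} Y" and p: "p > 1"
    and s: "s \<in> {0..1}" and u: "\<And>k. k \<le> N \<Longrightarrow> u k \<in> {0..1}" and R: "R \<ge> 0"
    and meas: "measure M {\<omega>\<in>space M. (\<Sum>k<N. \<bar>Y (u (Suc k)) \<omega> - Y (u k) \<omega>\<bar> powr p) \<le> R} \<ge> 1/2"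
    and v: "integral\<^sup>L M (\<lambda>\<omega>. (Y s \<omega>)^2) = v"
  shows "(\<Sum>k<N. \<bar>integral\<^sup>L M (\<lambda>\<omega>. Y s \<omega> * Y (u (Suc k)) \<omega>) - integral\<^sup>L M (\<lambda>\<omega>. Y s \<omega> * Y (u k) \<omega>)\<bar> powr p)
         \<le> ((v + 4*(1+R)^2)/2) powr p"
proof -
  interpret prob_space M by (rule P)
  have Ym: "Y t \<in> borel_measurable M" if "t \<in> {0..1}" for t
    using G that unfolding centered_gaussian_process_def by blast
  have sq: "integrable M (\<lambda>\<omega>. (Y t \<omega>)^2)" if "t \<in> {0..1}" for t
    using crv_moments[OF P cgp_single[OF G that]] by metis
  have pint: "integrable M (\<lambda>\<omega>. Y t \<omega> * Y t' \<omega>)" if "t \<in> {0..1}" "t' \<in> {0..1}" for t t'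
    by (rule integrable_prod_sq) (use that sq Ym in auto)
  have Yu: "u (Suc k) \<in> {0..1}" "u k \<in> {0..1}" if "k < N" for k using u that by auto
  define D where "D k = integral\<^sup>L M (\<lambda>\<omega>. Y s \<omega> * Y (u (Suc k)) \<omega>) - integral\<^sup>L M (\<lambda>\<omega>. Y s \<omega> * Y (u k) \<omega>)" for k
  have Dint: "D k = integral\<^sup>L M (\<lambda>\<omega>. Y s \<omega> * (Y (u (Suc k)) \<omega> - Y (u k) \<omega>))" if "k < N" for k
    unfolding D_def using pint[OF s Yu(1)[OF that]] pint[OF s Yu(2)[OF that]]
    by (simp add: right_diff_distrib)
  define Q where "Q = (\<Sum>k<N. \<bar>D k\<bar> powr p)"
  define K where "K = (v + 4*(1+R)^2)/2"
  have v0: "v \<ge> 0" unfolding v[symmetric] by simp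
  have K0: "K \<ge> 0" unfolding K_def using v0 by simp
  have "Q \<le> K powr p"
  proof (cases "Q = 0")
    case True then show ?thesis by simp
  next
    case False
    have Q0: "Q > 0" using False unfolding Q_def by (metis sum_nonneg powr_ge_zero order_le_less)
    define qq where "qq = p / (p - 1)"
    have qq1: "qq > 1" using p unfolding qq_def by (simp add: divide_simps)
    have pq: "1/p + 1/qq = 1" using p unfolding qq_def by (simp add: divide_simps)
    define a where "a k = sgn (D k) * (\<bar>D k\<bar> / Q powr (1/p)) powr (p - 1)" for k
    define Z where "Z \<omega> = (\<Sum>k<N. a k * (Y (u (Suc k)) \<omega> - Y (u k) \<omega>))" for \<omega>
    have GZ: "centered_gaussian_rv M Z"
      unfolding Z_def[abs_def] by (rule cgp_comb_diff[OF G]) (use Yu in auto)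
    have Zm: "Z \<in> borel_measurable M" using GZ unfolding centered_gaussian_rv_def by blast
    have aD: "a k * D k = \<bar>D k\<bar> powr p / Q powr ((p - 1) / p)" for k
    proof (cases "D k = 0")
      case True then show ?thesis using p by (simp add: a_def)
    next
      case False
      have "a k * D k = \<bar>D k\<bar> * (\<bar>D k\<bar> powr (p-1) / (Q powr (1/p)) powr (p-1))"
        unfolding a_def using Q0 by (simp add: powr_divide sgn_if)
      also have "\<dots> = \<bar>D k\<bar> powr p / Q powr ((p - 1) / p)"
        using False Q0 p by (simp add: powr_powr powr_mult_base field_simps powr_add[symmetric])
      finally show ?thesis .
    qed
    have sumaD: "(\<Sum>k<N. a k * D k) = Q powr (1/p)"
    proof -
      have "(\<Sum>k<N. a k * D k) = Q / Q powr ((p - 1) / p)"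
        unfolding aD Q_def by (simp add: sum_divide_distrib)
      also have "\<dots> = Q powr (1/p)"
      proof -
        have e: "1/p + (p-1)/p = 1" using p by (simp add: field_simps)
        have "Q powr (1/p) * Q powr ((p - 1) / p) = Q" using Q0 by (simp add: powr_add[symmetric] e)
        then show ?thesis using Q0 by (simp add: field_simps)
      qed
      finally show ?thesis .
    qed
    have EZ: "integral\<^sup>L M (\<lambda>\<omega>. Y s \<omega> * Z \<omega>) = (\<Sum>k<N. a k * D k)"
    proof -
      have "integral\<^sup>L M (\<lambda>\<omega>. Y s \<omega> * Z \<omega>) = integral\<^sup>L M (\<lambda>\<omega>. \<Sum>k<N. a k * (Y s \<omega> * (Y (u (Suc k)) \<omega> - Y (u k) \<omega>)))"
        unfolding Z_def by (simp add: sum_distrib_left algebra_simps)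
      also have "\<dots> = (\<Sum>k<N. integral\<^sup>L M (\<lambda>\<omega>. a k * (Y s \<omega> * (Y (u (Suc k)) \<omega> - Y (u k) \<omega>))))"
        by (subst Bochner_Integration.integral_sum) (use pint[OF s] Yu in \<open>auto simp: right_diff_distrib\<close>)
      also have "\<dots> = (\<Sum>k<N. a k * D k)"
        by (intro sum.cong refl) (simp add: Dint)
      finally show ?thesis .
    qed
    have apow: "\<bar>a k\<bar> powr qq = \<bar>D k\<bar> powr p / Q" for k
    proof -
      have "\<bar>a k\<bar> = (\<bar>D k\<bar> / Q powr (1/p)) powr (p - 1)"
        unfolding a_def by (cases "D k = 0") (auto simp: abs_mult)
      then have "\<bar>a k\<bar> powr qq = (\<bar>D k\<bar> / Q powr (1/p)) powr p"
        using p unfolding qq_def by (simp add: powr_powr)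
      also have "\<dots> = \<bar>D k\<bar> powr p / Q"
        using Q0 p by (simp add: powr_divide powr_powr)
      finally show ?thesis .
    qed
    have Zb: "\<bar>Z \<omega>\<bar> \<le> 1 + (\<Sum>k<N. \<bar>Y (u (Suc k)) \<omega> - Y (u k) \<omega>\<bar> powr p)" for \<omega>
    proof -
      have "\<bar>Z \<omega>\<bar> \<le> (\<Sum>k<N. \<bar>a k\<bar> * \<bar>Y (u (Suc k)) \<omega> - Y (u k) \<omega>\<bar>)"
        unfolding Z_def by (rule order_trans[OF sum_abs]) (simp add: abs_mult)
      also have "\<dots> \<le> (\<Sum>k<N. \<bar>D k\<bar> powr p / Q + \<bar>Y (u (Suc k)) \<omega> - Y (u k) \<omega>\<bar> powr p)"
      proof (rule sum_mono)
        fix k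
        have "\<bar>a k\<bar> * \<bar>Y (u (Suc k)) \<omega> - Y (u k) \<omega>\<bar> \<le> \<bar>a k\<bar> powr qq / qq + \<bar>Y (u (Suc k)) \<omega> - Y (u k) \<omega>\<bar> powr p / p"
          using Youngs_inequality[OF qq1 p _ abs_ge_zero abs_ge_zero] pq by (simp add: add.commute mult.commute)
        also have "\<dots> \<le> \<bar>a k\<bar> powr qq + \<bar>Y (u (Suc k)) \<omega> - Y (u k) \<omega>\<bar> powr p"
        proof -
          have h: "x / c \<le> x" if "0 \<le> (x::real)" "1 \<le> c" for x c
          proof -
            have "x * 1 \<le> x * c" using that by (intro mult_left_mono) auto
            then show ?thesis using that by (simp add: divide_le_eq)
          qed
          show ?thesis using qq1 p by (intro add_mono h) auto
        qed
        finally show "\<bar>a k\<bar> * \<bar>Y (u (Suc k)) \<omega> - Y (u k) \<omega>\<bar> \<le> \<bar>D k\<bar> powr p / Q + \<bar>Y (u (Suc k)) \<omega> - Y (u k) \<omega>\<bar> powr p"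
          by (simp add: apow)
      qed
      also have "\<dots> = 1 + (\<Sum>k<N. \<bar>Y (u (Suc k)) \<omega> - Y (u k) \<omega>\<bar> powr p)"
        using Q0 by (simp add: sum.distrib Q_def flip: sum_divide_distrib)
      finally show ?thesis .
    qed
    obtain \<sigma> where s0: "\<sigma> \<ge> 0" and Zi: "integrable M (\<lambda>\<omega>. (Z \<omega>)^2)"
      and Zv: "integral\<^sup>L M (\<lambda>\<omega>. (Z \<omega>)^2) = \<sigma>^2"
      and Zp: "\<sigma> > 0 \<Longrightarrow> (\<forall>r\<ge>0. measure M {\<omega>\<in>space M. \<bar>Z \<omega>\<bar> \<le> r} \<le> r / \<sigma>)"
      using crv_moments[OF P GZ] by metis
    have sig: "\<sigma> \<le> 2 * (1 + R)"
    proof (cases "\<sigma> = 0")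
      case True then show ?thesis using R by simp
    next
      case False
      then have sp: "\<sigma> > 0" using s0 by simp
      have "1/2 \<le> measure M {\<omega>\<in>space M. (\<Sum>k<N. \<bar>Y (u (Suc k)) \<omega> - Y (u k) \<omega>\<bar> powr p) \<le> R}"
        by (rule meas)
      also have "\<dots> \<le> measure M {\<omega>\<in>space M. \<bar>Z \<omega>\<bar> \<le> 1 + R}"
      proof (rule finite_measure_mono)
        show "{\<omega> \<in> space M. \<bar>Z \<omega>\<bar> \<le> 1 + R} \<in> sets M" using Zm by measurable
        show "{\<omega> \<in> space M. (\<Sum>k<N. \<bar>Y (u (Suc k)) \<omega> - Y (u k) \<omega>\<bar> powr p) \<le> R} \<subseteq> {\<omega> \<in> space M. \<bar>Z \<omega>\<bar> \<le> 1 + R}"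
        proof
          fix x assume "x \<in> {\<omega> \<in> space M. (\<Sum>k<N. \<bar>Y (u (Suc k)) \<omega> - Y (u k) \<omega>\<bar> powr p) \<le> R}"
          then show "x \<in> {\<omega> \<in> space M. \<bar>Z \<omega>\<bar> \<le> 1 + R}" using Zb[of x] by auto
        qed
      qed
      also have "\<dots> \<le> (1 + R) / \<sigma>" using Zp[OF sp] R by simp
      finally show ?thesis using sp by (simp add: field_simps)
    qed
    have "Q powr (1/p) = integral\<^sup>L M (\<lambda>\<omega>. Y s \<omega> * Z \<omega>)" using EZ sumaD by simp
    also have "\<dots> \<le> integral\<^sup>L M (\<lambda>\<omega>. ((Y s \<omega>)^2 + (Z \<omega>)^2) / 2)"
    proof (rule integral_mono)
      show "integrable M (\<lambda>\<omega>. Y s \<omega> * Z \<omega>)"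
        by (rule integrable_prod_sq) (use sq[OF s] Zi Ym[OF s] Zm in auto)
      show "integrable M (\<lambda>\<omega>. ((Y s \<omega>)^2 + (Z \<omega>)^2) / 2)" using sq[OF s] Zi by auto
      fix \<omega> show "Y s \<omega> * Z \<omega> \<le> ((Y s \<omega>)^2 + (Z \<omega>)^2) / 2"
        using sum_squares_bound[of "Y s \<omega>" "Z \<omega>"] by (simp add: power2_eq_square)
    qed
    also have "\<dots> = (v + \<sigma>^2) / 2"
      using sq[OF s] Zi v Zv by simp
    also have "\<dots> \<le> K"
    proof -
      have "\<sigma>^2 \<le> (2*(1+R))^2" using sig s0 by (intro power_mono) auto
      also have "(2*(1+R))^2 = 4*(1+R)^2" by (simp add: power2_eq_square algebra_simps)
      finally show ?thesis unfolding K_def by simp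
    qed
    finally have QK: "Q powr (1/p) \<le> K" .
    have "Q = (Q powr (1/p)) powr p" using Q0 p by (simp add: powr_powr)
    also have "\<dots> \<le> K powr p" using QK p by (intro powr_mono2) auto
    finally show ?thesis .
  qed
  then show ?thesis unfolding Q_def D_def K_def .
qed


lemma grid_in01:
  assumes "k \<le> b ^ n" "b \<ge> (1::nat)"
  shows "real k / real b ^ n \<in> {0..1}"
proof -
  have "real k \<le> real b ^ n" using assms(1) by (metis of_nat_le_iff of_nat_power)
  moreover have "real b ^ n > 0" using assms(2) by simp
  ultimately show ?thesis by (simp add: divide_le_eq)
qed

lemma nat_floor_bn: "nat \<lfloor>1 * real b ^ n\<rfloor> = b ^ n"
  by (metis floor_of_nat mult_1 nat_int of_nat_power)



lemma part_b:
  fixes M :: "'a measure" and Y :: "real \<Rightarrow> 'a \<Rightarrow> real"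
  assumes P: "prob_space M" and G: "centered_gaussian_process M {0..1} Y"
    and AEv: "AE \<omega> in M. \<exists>v. has_badic_pvar b p (\<lambda>t. Y t \<omega>) 1 v"
    and p: "p > 1" and b: "b \<ge> 2" and s: "s \<in> {0..1}"
  shows "limsup (\<lambda>n. ereal (\<Sum>k<b ^ n.
                     \<bar>integral\<^sup>L M (\<lambda>\<omega>. Y s \<omega> * Y (real (Suc k) / real b ^ n) \<omega>)
                      - integral\<^sup>L M (\<lambda>\<omega>. Y s \<omega> * Y (real k / real b ^ n) \<omega>)\<bar> powr p)) < \<infinity>"
proof -
  interpret prob_space M by (rule P)
  have Ym: "Y t \<in> borel_measurable M" if "t \<in> {0..1}" for t
    using G that unfolding centered_gaussian_process_def by blast
  define T where "T n \<omega> = (\<Sum>k<b^n. \<bar>Y (real (Suc k) / real b ^ n) \<omega> - Y (real k / real b ^ n) \<omega>\<bar> powr p)" for n \<omega>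
  have Teq: "badic_pvar_sum b p (\<lambda>t. Y t \<omega>) 1 n = T n \<omega>" for n \<omega>
    unfolding badic_pvar_sum_def T_def nat_floor_bn ..
  have g1: "real (Suc k) / real b ^ n \<in> {0..1}" "real k / real b ^ n \<in> {0..1}" if "k < b ^ n" for k n
    using grid_in01[of "Suc k" b n] grid_in01[of k b n] that b by auto
  have Tm[measurable]: "T n \<in> borel_measurable M" for n
    unfolding T_def[abs_def]
  proof (rule borel_measurable_sum)
    fix k assume "k \<in> {..<b^n}"
    then have m1: "Y (real (Suc k) / real b ^ n) \<in> borel_measurable M" "Y (real k / real b ^ n) \<in> borel_measurable M"
      using g1 Ym by auto
    show "(\<lambda>x. \<bar>Y (real (Suc k) / real b ^ n) x - Y (real k / real b ^ n) x\<bar> powr p) \<in> borel_measurable M"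
      using m1 by measurable
  qed
  have AEb: "AE \<omega> in M. \<exists>R::nat. \<forall>n. T n \<omega> \<le> real R"
    using AEv
  proof eventually_elim
    case (elim \<omega>)
    then obtain v where "(\<lambda>n. T n \<omega>) \<longlonglongrightarrow> v" unfolding has_badic_pvar_def Teq by blast
    then have "Bseq (\<lambda>n. T n \<omega>)" by (intro convergent_imp_Bseq convergentI)
    then obtain K where K: "\<forall>n. norm (T n \<omega>) \<le> K" by (auto elim: BseqE)
    have "T n \<omega> \<le> real (nat \<lceil>K\<rceil>)" for n
    proof -
      have "T n \<omega> \<le> K" using K[rule_format, of n] by simp
      also have "K \<le> real (nat \<lceil>K\<rceil>)" by (rule real_nat_ceiling_ge)
      finally show ?thesis .
    qed
    then show ?case by blast
  qed
  define A where "A R = {\<omega>\<in>space M. \<forall>n. T n \<omega> \<le> real R}" for R :: nat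
  have Asets: "A R \<in> sets M" for R unfolding A_def by measurable
  have Ainc: "incseq A"
    unfolding incseq_def A_def by (auto intro: order_trans)
  have AU: "(\<Union>R. A R) = {\<omega>\<in>space M. \<exists>R::nat. \<forall>n. T n \<omega> \<le> real R}"
    unfolding A_def by auto
  have "prob (\<Union>R. A R) = 1"
    unfolding AU by (subst prob_Collect_eq_1) (use AEb in \<open>auto intro: Asets[unfolded A_def]\<close>)
  moreover have "(\<lambda>R. prob (A R)) \<longlonglongrightarrow> prob (\<Union>R. A R)"
    by (rule Lim_measure_incseq) (use Asets Ainc in auto)
  ultimately have "(\<lambda>R. prob (A R)) \<longlonglongrightarrow> 1" by simp
  then have "eventually (\<lambda>R. prob (A R) > 1/2) sequentially"
    by (rule order_tendstoD) simp
  then obtain N0 where "\<forall>n\<ge>N0. prob (A n) > 1/2" by (auto simp: eventually_sequentially)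
  then obtain R where AR: "prob (A R) \<ge> 1/2" by (metis order_refl less_imp_le)
  define B where "B = ((integral\<^sup>L M (\<lambda>\<omega>. (Y s \<omega>)^2) + 4*(1+real R)^2)/2) powr p"
  have bound: "(\<Sum>k<b ^ n.
                     \<bar>integral\<^sup>L M (\<lambda>\<omega>. Y s \<omega> * Y (real (Suc k) / real b ^ n) \<omega>)
                      - integral\<^sup>L M (\<lambda>\<omega>. Y s \<omega> * Y (real k / real b ^ n) \<omega>)\<bar> powr p) \<le> B" for n
  proof -
    have "1/2 \<le> prob (A R)" by (rule AR)
    also have "\<dots> \<le> prob {\<omega>\<in>space M. (\<Sum>k<b^n. \<bar>Y (real (Suc k) / real b ^ n) \<omega> - Y (real k / real b ^ n) \<omega>\<bar> powr p) \<le> real R}"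
    proof (rule finite_measure_mono)
      show "A R \<subseteq> {\<omega>\<in>space M. (\<Sum>k<b^n. \<bar>Y (real (Suc k) / real b ^ n) \<omega> - Y (real k / real b ^ n) \<omega>\<bar> powr p) \<le> real R}"
        unfolding A_def T_def by auto
      show "{\<omega>\<in>space M. (\<Sum>k<b^n. \<bar>Y (real (Suc k) / real b ^ n) \<omega> - Y (real k / real b ^ n) \<omega>\<bar> powr p) \<le> real R} \<in> sets M"
        using Tm[of n] unfolding T_def[abs_def] by measurable
    qed
    finally have m: "1/2 \<le> prob {\<omega>\<in>space M. (\<Sum>k<b^n. \<bar>Y (real (Suc k) / real b ^ n) \<omega> - Y (real k / real b ^ n) \<omega>\<bar> powr p) \<le> real R}" .
    show ?thesis unfolding B_def
    proof (rule key_bound[where u="\<lambda>k. real k / real b ^ n" and N="b^n" and R="real R", OF P G p s _ _ _ refl])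
      show "1/2 \<le> prob {\<omega>\<in>space M. (\<Sum>k<b^n. \<bar>Y ((\<lambda>k. real k / real b ^ n) (Suc k)) \<omega> - Y ((\<lambda>k. real k / real b ^ n) k) \<omega>\<bar> powr p) \<le> real R}"
        using m by simp
      show "(\<lambda>k. real k / real b ^ n) k \<in> {0..1}" if "k \<le> b ^ n" for k
        using grid_in01[OF that] b by simp
    qed simp
  qed
  have "limsup (\<lambda>n. ereal (\<Sum>k<b ^ n.
                     \<bar>integral\<^sup>L M (\<lambda>\<omega>. Y s \<omega> * Y (real (Suc k) / real b ^ n) \<omega>)
                      - integral\<^sup>L M (\<lambda>\<omega>. Y s \<omega> * Y (real k / real b ^ n) \<omega>)\<bar> powr p)) \<le> ereal B"
    by (intro Limsup_bounded always_eventually allI) (simp only: ereal_less_eq bound)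
  also have "ereal B < \<infinity>" by simp
  finally show ?thesis .
qed



lemma powr_lip0:
  fixes p u v M :: real
  assumes p: "p \<ge> 1" and u: "0 \<le> u" "u \<le> v" "v \<le> M"
  shows "v powr p - u powr p \<le> p * M powr (p - 1) * (v - u)"
proof (cases "u = v")
  case True then show ?thesis by simp
next
  case False
  then have uv: "u < v" using u by simp
  have cont: "continuous_on {u..v} (\<lambda>z. z powr p)"
    using u p by (intro continuous_on_powr' continuous_intros) auto
  have dif: "(\<lambda>z. z powr p) differentiable (at x)" if "u < x" "x < v" for x
    using has_real_derivative_powr[of x p] that u unfolding real_differentiable_def by auto
  obtain l z where z: "u < z" "z < v" and D: "DERIV (\<lambda>z. z powr p) z :> l"
    and eq: "v powr p - u powr p = (v - u) * l"
    using MVT[OF uv cont dif] by blast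
  have "DERIV (\<lambda>z. z powr p) z :> p * z powr (p - 1)"
    using has_real_derivative_powr[of z p] z u by simp
  then have l: "l = p * z powr (p - 1)" using D DERIV_unique by blast
  have "z powr (p - 1) \<le> M powr (p - 1)"
    using z u p by (intro powr_mono2) auto
  then have "l \<le> p * M powr (p - 1)" unfolding l using p by (intro mult_left_mono) auto
  then show ?thesis unfolding eq using uv by (simp add: mult.commute mult_left_mono)
qed

lemma powr_lip:
  fixes p x y M :: real
  assumes p: "p \<ge> 1" and x: "\<bar>x\<bar> \<le> M" and y: "\<bar>y\<bar> \<le> M"
  shows "\<bar>\<bar>x\<bar> powr p - \<bar>y\<bar> powr p\<bar> \<le> p * M powr (p - 1) * \<bar>x - y\<bar>"
proof -
  have M0: "0 \<le> p * M powr (p - 1)" using p by simp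
  have a: "\<bar>\<bar>x\<bar> - \<bar>y\<bar>\<bar> \<le> \<bar>x - y\<bar>" by simp
  show ?thesis
  proof (cases "\<bar>x\<bar> \<le> \<bar>y\<bar>")
    case True
    have "\<bar>y\<bar> powr p - \<bar>x\<bar> powr p \<le> p * M powr (p - 1) * (\<bar>y\<bar> - \<bar>x\<bar>)"
      by (rule powr_lip0) (use p True y in auto)
    moreover have "\<bar>x\<bar> powr p \<le> \<bar>y\<bar> powr p" using True p by (intro powr_mono2) auto
    moreover have "p * M powr (p - 1) * (\<bar>y\<bar> - \<bar>x\<bar>) \<le> p * M powr (p - 1) * \<bar>x - y\<bar>"
      using M0 a by (intro mult_left_mono) auto
    ultimately show ?thesis by simp
  next
    case False
    have "\<bar>x\<bar> powr p - \<bar>y\<bar> powr p \<le> p * M powr (p - 1) * (\<bar>x\<bar> - \<bar>y\<bar>)"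
      by (rule powr_lip0) (use p False x in auto)
    moreover have "\<bar>y\<bar> powr p \<le> \<bar>x\<bar> powr p" using False p by (intro powr_mono2) auto
    moreover have "p * M powr (p - 1) * (\<bar>x\<bar> - \<bar>y\<bar>) \<le> p * M powr (p - 1) * \<bar>x - y\<bar>"
      using M0 a by (intro mult_left_mono) auto
    ultimately show ?thesis by simp
  qed
qed

definition dg :: "nat \<Rightarrow> nat \<Rightarrow> nat \<Rightarrow> nat" where "dg b j k = k div b ^ j mod b"
definition dl :: "nat \<Rightarrow> real" where "dl i = (if i = 0 then 1 else if i = 1 then -1 else 0)"
definition XX :: "nat \<Rightarrow> real \<Rightarrow> nat \<Rightarrow> nat \<Rightarrow> real" where
  "XX b \<beta> n k = (\<Sum>j<n. \<beta> ^ j * dl (dg b j k))"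
definition PP :: "nat \<Rightarrow> real \<Rightarrow> real \<Rightarrow> nat \<Rightarrow> real" where
  "PP b \<beta> p J = (\<Sum>r<b ^ J. \<bar>XX b \<beta> J r\<bar> powr p)"

lemma dl_abs: "\<bar>dl i\<bar> \<le> 1" by (simp add: dl_def)

lemma geom_tail:
  fixes \<beta> :: real assumes "0 \<le> \<beta>" "\<beta> < 1"
  shows "(\<Sum>j\<in>{J..<n}. \<beta> ^ j) \<le> \<beta> ^ J / (1 - \<beta>)"
proof (cases "J \<le> n")
  case True
  have "(\<Sum>j\<in>{J..<n}. \<beta> ^ j) = (\<Sum>i<n - J. \<beta> ^ (J + i))"
  proof -
    have "(\<Sum>j\<in>{J..<n}. \<beta> ^ j) = (\<Sum>i\<in>{0..<n - J}. \<beta> ^ (i + J))"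
      using sum.shift_bounds_nat_ivl[of "\<lambda>j. \<beta> ^ j" 0 J "n - J"] True by simp
    then show ?thesis by (simp add: atLeast0LessThan add.commute)
  qed
  also have "\<dots> = \<beta> ^ J * (\<Sum>i<n - J. \<beta> ^ i)" by (simp add: power_add sum_distrib_left)
  also have "\<dots> = \<beta> ^ J * ((1 - \<beta> ^ (n - J)) / (1 - \<beta>))" using assms by (simp add: sum_gp_strict)
  also have "\<dots> \<le> \<beta> ^ J * (1 / (1 - \<beta>))" using assms
    by (intro mult_left_mono divide_right_mono) auto
  finally show ?thesis by simp
next
  case False then show ?thesis using assms by simp
qed

lemma XX_bound:
  assumes "0 \<le> \<beta>" "\<beta> < 1"
  shows "\<bar>XX b \<beta> n k\<bar> \<le> 1 / (1 - \<beta>)"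
proof -
  have "\<bar>XX b \<beta> n k\<bar> \<le> (\<Sum>j<n. \<bar>\<beta> ^ j * dl (dg b j k)\<bar>)" unfolding XX_def by (rule sum_abs)
  also have "\<dots> \<le> (\<Sum>j\<in>{0..<n}. \<beta> ^ j)"
    unfolding atLeast0LessThan by (intro sum_mono) (use assms dl_abs in \<open>auto simp: abs_mult intro: mult_left_le\<close>)
  also have "\<dots> \<le> \<beta> ^ 0 / (1 - \<beta>)" by (rule geom_tail[OF assms])
  finally show ?thesis by simp
qed

lemma XX_diff:
  assumes "0 \<le> \<beta>" "\<beta> < 1" "J \<le> n"
  shows "\<bar>XX b \<beta> n k - XX b \<beta> J k\<bar> \<le> \<beta> ^ J / (1 - \<beta>)"
proof -
  have "XX b \<beta> n k = XX b \<beta> J k + (\<Sum>j\<in>{J..<n}. \<beta> ^ j * dl (dg b j k))"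
    unfolding XX_def using assms(3)
    by (simp add: atLeast0LessThan[symmetric] sum.atLeastLessThan_concat)
  then have "\<bar>XX b \<beta> n k - XX b \<beta> J k\<bar> = \<bar>\<Sum>j\<in>{J..<n}. \<beta> ^ j * dl (dg b j k)\<bar>" by simp
  also have "\<dots> \<le> (\<Sum>j\<in>{J..<n}. \<bar>\<beta> ^ j * dl (dg b j k)\<bar>)" by (rule sum_abs)
  also have "\<dots> \<le> (\<Sum>j\<in>{J..<n}. \<beta> ^ j)"
    by (intro sum_mono) (use assms dl_abs in \<open>auto simp: abs_mult intro: mult_left_le\<close>)
  also have "\<dots> \<le> \<beta> ^ J / (1 - \<beta>)" by (rule geom_tail[OF assms(1,2)])
  finally show ?thesis .
qed

lemma dg_mod:
  assumes "j < J" "b > 0"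
  shows "dg b j (k mod b ^ J) = dg b j k"
proof -
  have e: "b ^ J = b ^ j * b ^ (J - j)" using assms by (simp flip: power_add)
  have "(k mod b ^ J) div b ^ j = k div b ^ j mod b ^ (J - j)"
    unfolding e mod_mult2_eq using assms by simp
  moreover have "k div b ^ j mod b ^ (J - j) mod b = k div b ^ j mod b"
    using assms by (intro mod_mod_cancel) (simp add: dvd_power)
  ultimately show ?thesis unfolding dg_def by simp
qed

lemma XX_mod:
  assumes "b > 0"
  shows "XX b \<beta> J (k mod b ^ J) = XX b \<beta> J k"
  unfolding XX_def using dg_mod[OF _ assms] by (intro sum.cong) auto


lemma sum_periodic_exact:
  fixes \<phi> :: "nat \<Rightarrow> real"
  shows "(\<Sum>k<q * N. \<phi> (k mod N)) = real q * (\<Sum>r<N. \<phi> r)"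
proof -
  have "(\<Sum>k<q * N. \<phi> (k mod N)) = (\<Sum>m<q. \<Sum>i\<in>{m * N..<m * N + N}. \<phi> (i mod N))"
    by (rule sum.nat_group[symmetric])
  also have "\<dots> = (\<Sum>m<q. \<Sum>r<N. \<phi> r)"
  proof (rule sum.cong[OF refl])
    fix m
    have "(\<Sum>i\<in>{m * N..<m * N + N}. \<phi> (i mod N)) = (\<Sum>i\<in>{0..<N}. \<phi> ((i + m * N) mod N))"
      using sum.shift_bounds_nat_ivl[of "\<lambda>i. \<phi> (i mod N)" 0 "m * N" N] by (simp add: add.commute)
    also have "\<dots> = (\<Sum>r<N. \<phi> r)" by (simp add: atLeast0LessThan)
    finally show "(\<Sum>i\<in>{m * N..<m * N + N}. \<phi> (i mod N)) = (\<Sum>r<N. \<phi> r)" .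
  qed
  also have "\<dots> = real q * (\<Sum>r<N. \<phi> r)" by simp
  finally show ?thesis .
qed

lemma sum_periodic:
  fixes \<phi> :: "nat \<Rightarrow> real"
  assumes B: "\<And>r. \<bar>\<phi> r\<bar> \<le> B" and N: "N > 0"
  shows "\<bar>(\<Sum>k<K. \<phi> (k mod N)) - real (K div N) * (\<Sum>r<N. \<phi> r)\<bar> \<le> real N * B"
proof -
  define q where "q = K div N"
  define r where "r = K mod N"
  have K: "K = q * N + r" unfolding q_def r_def by simp
  have "(\<Sum>k<K. \<phi> (k mod N)) = (\<Sum>k<q * N. \<phi> (k mod N)) + (\<Sum>k\<in>{q * N..<q * N + r}. \<phi> (k mod N))"
    unfolding K by (simp add: atLeast0LessThan[symmetric] sum.atLeastLessThan_concat)
  also have "(\<Sum>k\<in>{q * N..<q * N + r}. \<phi> (k mod N)) = (\<Sum>i\<in>{0..<r}. \<phi> ((i + q * N) mod N))"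
    using sum.shift_bounds_nat_ivl[of "\<lambda>i. \<phi> (i mod N)" 0 "q * N" r] by (simp add: add.commute)
  also have "\<dots> = (\<Sum>i\<in>{0..<r}. \<phi> i)"
  proof (rule sum.cong[OF refl])
    fix x assume "x \<in> {0..<r}"
    then have "x < N" unfolding r_def using N by (meson atLeastLessThan_iff mod_less_divisor order.strict_trans)
    then show "\<phi> ((x + q * N) mod N) = \<phi> x" by simp
  qed
  finally have e: "(\<Sum>k<K. \<phi> (k mod N)) - real (K div N) * (\<Sum>r<N. \<phi> r) = (\<Sum>i\<in>{0..<r}. \<phi> i)"
    unfolding sum_periodic_exact q_def by simp
  have "\<bar>\<Sum>i\<in>{0..<r}. \<phi> i\<bar> \<le> (\<Sum>i\<in>{0..<r}. \<bar>\<phi> i\<bar>)" by (rule sum_abs)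
  also have "\<dots> \<le> (\<Sum>i\<in>{0..<r}. B)" by (intro sum_mono B)
  also have "\<dots> = real r * B" by simp
  also have "\<dots> \<le> real N * B"
  proof -
    have "B \<ge> 0" using B[of 0] by simp
    moreover have "r \<le> N" using N unfolding r_def by simp
    ultimately show ?thesis by (intro mult_right_mono) auto
  qed
  finally show ?thesis unfolding e .
qed

definition LL :: "nat \<Rightarrow> real \<Rightarrow> real \<Rightarrow> nat \<Rightarrow> real" where
  "LL b \<beta> p J = real b * PP b \<beta> p J / real b ^ J"

lemma S_est:
  assumes b: "b \<ge> 2" and \<beta>: "0 \<le> \<beta>" "\<beta> < 1" and p: "p \<ge> 1" and J: "J \<le> n"
  shows "\<bar>(\<Sum>k<K. \<bar>XX b \<beta> n k\<bar> powr p) - real (K div b ^ J) * PP b \<beta> p J\<bar>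
     \<le> real K * (p * (1 / (1 - \<beta>)) powr (p - 1)) * (\<beta> ^ J / (1 - \<beta>)) + real b ^ J * (1 / (1 - \<beta>)) powr p"
proof -
  define M where "M = 1 / (1 - \<beta>)"
  define Lc where "Lc = p * M powr (p - 1)"
  have bpos: "b > 0" using b by simp
  have XB: "\<bar>XX b \<beta> m k\<bar> \<le> M" for m k unfolding M_def by (rule XX_bound[OF \<beta>])
  have M0: "M \<ge> 0" unfolding M_def using \<beta> by simp
  have "\<bar>(\<Sum>k<K. \<bar>XX b \<beta> n k\<bar> powr p) - (\<Sum>k<K. \<bar>XX b \<beta> J (k mod b ^ J)\<bar> powr p)\<bar>
        \<le> (\<Sum>k<K. \<bar>\<bar>XX b \<beta> n k\<bar> powr p - \<bar>XX b \<beta> J (k mod b ^ J)\<bar> powr p\<bar>)"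
    by (simp add: sum_subtractf[symmetric] sum_abs)
  also have "\<dots> \<le> (\<Sum>k<K. Lc * (\<beta> ^ J / (1 - \<beta>)))"
  proof (intro sum_mono)
    fix k
    have "\<bar>\<bar>XX b \<beta> n k\<bar> powr p - \<bar>XX b \<beta> J (k mod b ^ J)\<bar> powr p\<bar> \<le> Lc * \<bar>XX b \<beta> n k - XX b \<beta> J (k mod b ^ J)\<bar>"
      unfolding Lc_def by (rule powr_lip[OF p XB XB])
    also have "\<dots> \<le> Lc * (\<beta> ^ J / (1 - \<beta>))"
      unfolding XX_mod[OF bpos] using XX_diff[OF \<beta> J] unfolding Lc_def using p M0
      by (intro mult_left_mono) auto
    finally show "\<bar>\<bar>XX b \<beta> n k\<bar> powr p - \<bar>XX b \<beta> J (k mod b ^ J)\<bar> powr p\<bar> \<le> Lc * (\<beta> ^ J / (1 - \<beta>))" .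
  qed
  also have "\<dots> = real K * Lc * (\<beta> ^ J / (1 - \<beta>))" by simp
  finally have e1: "\<bar>(\<Sum>k<K. \<bar>XX b \<beta> n k\<bar> powr p) - (\<Sum>k<K. \<bar>XX b \<beta> J (k mod b ^ J)\<bar> powr p)\<bar>
        \<le> real K * Lc * (\<beta> ^ J / (1 - \<beta>))" .
  have e2: "\<bar>(\<Sum>k<K. \<bar>XX b \<beta> J (k mod b ^ J)\<bar> powr p) - real (K div b ^ J) * PP b \<beta> p J\<bar> \<le> real (b ^ J) * M powr p"
    unfolding PP_def
  proof (rule sum_periodic[where \<phi>="\<lambda>r. \<bar>XX b \<beta> J r\<bar> powr p"])
    fix r show "\<bar>\<bar>XX b \<beta> J r\<bar> powr p\<bar> \<le> M powr p"
      using XB[of J r] p by (simp add: powr_mono2)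
  qed (use bpos in simp)
  show ?thesis using e1 e2 unfolding M_def[symmetric] Lc_def[symmetric] by simp
qed

lemma LL_cauchy_est:
  assumes b: "b \<ge> 2" and \<beta>: "0 \<le> \<beta>" "\<beta> < 1" and p: "p \<ge> 1" and J: "J \<le> J'"
  shows "\<bar>LL b \<beta> p J' - LL b \<beta> p J\<bar> \<le> real b * (p * (1 / (1 - \<beta>)) powr (p - 1)) * (\<beta> ^ J / (1 - \<beta>))"
proof -
  define C where "C = (p * (1 / (1 - \<beta>)) powr (p - 1)) * (\<beta> ^ J / (1 - \<beta>))"
  have bpos: "b > 0" using b by simp
  have ex: "(\<Sum>k<b ^ J'. \<bar>XX b \<beta> J (k mod b ^ J)\<bar> powr p) = real (b ^ (J' - J)) * PP b \<beta> p J"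
  proof -
    have eq: "b ^ J' = b ^ (J' - J) * b ^ J" using J by (simp flip: power_add)
    have "(\<Sum>k<b ^ J'. \<bar>XX b \<beta> J (k mod b ^ J)\<bar> powr p) = (\<Sum>k<b ^ (J' - J) * b ^ J. \<bar>XX b \<beta> J (k mod b ^ J)\<bar> powr p)"
      by (simp only: eq)
    also have "\<dots> = real (b ^ (J' - J)) * (\<Sum>r<b ^ J. \<bar>XX b \<beta> J r\<bar> powr p)"
      by (rule sum_periodic_exact)
    finally show ?thesis unfolding PP_def .
  qed
  have "\<bar>PP b \<beta> p J' - real (b ^ (J' - J)) * PP b \<beta> p J\<bar> \<le> real (b ^ J') * C"
  proof -
    have "\<bar>PP b \<beta> p J' - (\<Sum>k<b ^ J'. \<bar>XX b \<beta> J (k mod b ^ J)\<bar> powr p)\<bar>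
        \<le> (\<Sum>k<b ^ J'. \<bar>\<bar>XX b \<beta> J' k\<bar> powr p - \<bar>XX b \<beta> J (k mod b ^ J)\<bar> powr p\<bar>)"
      unfolding PP_def by (simp add: sum_subtractf[symmetric] sum_abs)
    also have "\<dots> \<le> (\<Sum>k<b ^ J'. C)"
    proof (intro sum_mono)
      fix k
      have "\<bar>\<bar>XX b \<beta> J' k\<bar> powr p - \<bar>XX b \<beta> J (k mod b ^ J)\<bar> powr p\<bar>
          \<le> (p * (1 / (1 - \<beta>)) powr (p - 1)) * \<bar>XX b \<beta> J' k - XX b \<beta> J (k mod b ^ J)\<bar>"
        by (rule powr_lip[OF p XX_bound[OF \<beta>] XX_bound[OF \<beta>]])
      also have "\<dots> \<le> C"
        unfolding XX_mod[OF bpos] C_def using XX_diff[OF \<beta> J] p \<beta>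
        by (intro mult_left_mono) auto
      finally show "\<bar>\<bar>XX b \<beta> J' k\<bar> powr p - \<bar>XX b \<beta> J (k mod b ^ J)\<bar> powr p\<bar> \<le> C" .
    qed
    finally show ?thesis unfolding ex by simp
  qed
  then have "\<bar>PP b \<beta> p J' - real (b ^ (J' - J)) * PP b \<beta> p J\<bar> / real b ^ J' \<le> C"
    using bpos by (simp add: divide_le_eq mult.commute)
  moreover have "\<bar>PP b \<beta> p J' - real (b ^ (J' - J)) * PP b \<beta> p J\<bar> / real b ^ J' * real b
      = \<bar>LL b \<beta> p J' - LL b \<beta> p J\<bar>"
  proof -
    have bJ: "real b ^ J' = real b ^ (J' - J) * real b ^ J" using J by (simp flip: power_add)
    have "\<bar>PP b \<beta> p J' - real (b ^ (J' - J)) * PP b \<beta> p J\<bar> / real b ^ J' * real b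
       = \<bar>(PP b \<beta> p J' - real (b ^ (J' - J)) * PP b \<beta> p J) * real b / real b ^ J'\<bar>"
      using bpos by (simp add: abs_mult abs_divide)
    also have "(PP b \<beta> p J' - real (b ^ (J' - J)) * PP b \<beta> p J) * real b / real b ^ J'
       = LL b \<beta> p J' - LL b \<beta> p J"
      unfolding LL_def using bpos bJ by (simp add: field_simps)
    finally show ?thesis .
  qed
  ultimately have "\<bar>LL b \<beta> p J' - LL b \<beta> p J\<bar> \<le> C * real b"
    by (metis mult_right_mono of_nat_0_le_iff)
  then show ?thesis unfolding C_def by (simp add: algebra_simps)
qed


lemma LL_conv:
  assumes b: "b \<ge> 2" and \<beta>: "0 \<le> \<beta>" "\<beta> < 1" and p: "p \<ge> 1"
  obtains L where "LL b \<beta> p \<longlonglongrightarrow> L"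
    "\<And>J. \<bar>LL b \<beta> p J - L\<bar> \<le> real b * (p * (1 / (1 - \<beta>)) powr (p - 1)) * (\<beta> ^ J / (1 - \<beta>))"
proof -
  define C where "C J = real b * (p * (1 / (1 - \<beta>)) powr (p - 1)) * (\<beta> ^ J / (1 - \<beta>))" for J
  have C0: "C \<longlonglongrightarrow> 0"
  proof -
    have "(\<lambda>J. \<beta> ^ J) \<longlonglongrightarrow> 0" using \<beta> by (intro LIMSEQ_power_zero) auto
    then have "(\<lambda>J. (real b * (p * (1 / (1 - \<beta>)) powr (p - 1)) / (1 - \<beta>)) * \<beta> ^ J) \<longlonglongrightarrow>
        (real b * (p * (1 / (1 - \<beta>)) powr (p - 1)) / (1 - \<beta>)) * 0"
      by (rule tendsto_mult_left)
    moreover have "C J = (real b * (p * (1 / (1 - \<beta>)) powr (p - 1)) / (1 - \<beta>)) * \<beta> ^ J" for J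
      unfolding C_def by simp
    then have "C = (\<lambda>J. (real b * (p * (1 / (1 - \<beta>)) powr (p - 1)) / (1 - \<beta>)) * \<beta> ^ J)" by (intro ext)
    ultimately show ?thesis by (simp only:) simp
  qed
  have est: "\<bar>LL b \<beta> p J' - LL b \<beta> p J\<bar> \<le> C J" if "J \<le> J'" for J J'
    unfolding C_def by (rule LL_cauchy_est[OF b \<beta> p that])
  have "Cauchy (LL b \<beta> p)"
  proof (rule metric_CauchyI)
    fix e :: real assume e: "e > 0"
    from C0 have "eventually (\<lambda>J. C J < e / 2) sequentially"
      by (rule order_tendstoD) (use e in simp)
    then obtain J0 where J0: "C J0 < e / 2" by (auto simp: eventually_sequentially)
    show "\<exists>M. \<forall>m\<ge>M. \<forall>n\<ge>M. dist (LL b \<beta> p m) (LL b \<beta> p n) < e"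
    proof (intro exI allI impI)
      fix m n assume "J0 \<le> m" "J0 \<le> n"
      then have "\<bar>LL b \<beta> p m - LL b \<beta> p J0\<bar> \<le> C J0" "\<bar>LL b \<beta> p n - LL b \<beta> p J0\<bar> \<le> C J0"
        by (auto intro: est)
      then show "dist (LL b \<beta> p m) (LL b \<beta> p n) < e" using J0 by (simp add: dist_real_def)
    qed
  qed
  then obtain L where L: "LL b \<beta> p \<longlonglongrightarrow> L" by (auto simp: Cauchy_convergent_iff convergent_def)
  have "\<bar>LL b \<beta> p J - L\<bar> \<le> C J" for J
  proof -
    have "(\<lambda>J'. \<bar>LL b \<beta> p J' - LL b \<beta> p J\<bar>) \<longlonglongrightarrow> \<bar>L - LL b \<beta> p J\<bar>"
      by (intro tendsto_intros L)
    then have "\<bar>L - LL b \<beta> p J\<bar> \<le> C J"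
      by (rule LIMSEQ_le_const2) (use est in auto)
    then show ?thesis by simp
  qed
  then show ?thesis using that L unfolding C_def by blast
qed

lemma XX_Suc:
  assumes "b > 0"
  shows "XX b \<beta> (Suc n) k = dl (dg b 0 k) + \<beta> * XX b \<beta> n (k div b)"
proof -
  have "XX b \<beta> (Suc n) k = \<beta> ^ 0 * dl (dg b 0 k) + (\<Sum>j<n. \<beta> ^ Suc j * dl (dg b (Suc j) k))"
    unfolding XX_def by (simp only: sum.lessThan_Suc_shift)
  also have "(\<Sum>j<n. \<beta> ^ Suc j * dl (dg b (Suc j) k)) = \<beta> * XX b \<beta> n (k div b)"
    unfolding XX_def sum_distrib_left
    by (intro sum.cong refl) (simp add: dg_def div_mult2_eq mult.assoc)
  finally show ?thesis by simp
qed

lemma pair_lower: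
  fixes y p :: real assumes "p \<ge> 0"
  shows "\<bar>1 + y\<bar> powr p + \<bar>-1 + y\<bar> powr p \<ge> 1"
proof (cases "y \<ge> 0")
  case True
  then have "\<bar>1 + y\<bar> powr p \<ge> 1" using assms by (intro ge_one_powr_ge_zero) auto
  then show ?thesis by (smt (verit) powr_ge_zero)
next
  case False
  then have "\<bar>-1 + y\<bar> powr p \<ge> 1" using assms by (intro ge_one_powr_ge_zero) auto
  then show ?thesis by (smt (verit) powr_ge_zero)
qed

lemma PP_lower:
  fixes \<beta> :: real
  assumes b: "b \<ge> 2" and p: "p \<ge> 0"
  shows "PP b \<beta> p (Suc n) \<ge> real b ^ n"
proof -
  have bpos: "b > 0" using b by simp
  define h where "h k = \<bar>XX b \<beta> (Suc n) k\<bar> powr p" for k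
  have "PP b \<beta> p (Suc n) = (\<Sum>i<b ^ n * b. h i)" unfolding PP_def h_def by (simp add: mult.commute)
  also have "\<dots> = (\<Sum>m<b ^ n. \<Sum>i\<in>{m * b..<m * b + b}. h i)" by (rule sum.nat_group[symmetric])
  also have "\<dots> \<ge> (\<Sum>m<b ^ n. (1::real))"
  proof (rule sum_mono)
    fix m
    have sub: "{m * b, m * b + 1} \<subseteq> {m * b..<m * b + b}" using b by auto
    have "(\<Sum>i\<in>{m * b, m * b + 1}. h i) \<le> (\<Sum>i\<in>{m * b..<m * b + b}. h i)"
      by (rule sum_mono2[OF _ sub]) (auto simp: h_def)
    moreover have "(\<Sum>i\<in>{m * b, m * b + 1}. h i) = h (m * b) + h (m * b + 1)" by simp
    moreover have "h (m * b) + h (m * b + 1) \<ge> 1"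
    proof -
      have d0: "(m * b) div b = m" "dg b 0 (m * b) = 0" using bpos by (auto simp: dg_def)
      have e1: "(1 + m * b) div b = m + 1 div b" by (rule div_mult_self1) (use bpos in simp)
      have e2: "(1 + m * b) mod b = 1 mod b" by (rule mod_mult_self1)
      have e3: "m * b + 1 = 1 + m * b" by (simp only: add.commute)
      have d1: "(m * b + 1) div b = m" "dg b 0 (m * b + 1) = 1" using b unfolding e3 dg_def
        by (simp_all only: e1 e2 power_0 div_by_1) auto
      show ?thesis unfolding h_def XX_Suc[OF bpos] d0 d1 using pair_lower[OF p, of "\<beta> * XX b \<beta> n m"]
        by (simp add: dl_def)
    qed
    ultimately show "1 \<le> (\<Sum>i\<in>{m * b..<m * b + b}. h i)" by simp
  qed
  finally show ?thesis by simp
qed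

lemma LL_lower:
  fixes \<beta> :: real
  assumes b: "b \<ge> 2" and p: "p \<ge> 0" and J: "J \<ge> 1"
  shows "LL b \<beta> p J \<ge> 1"
proof -
  obtain n where n: "J = Suc n" using J by (cases J) auto
  have "real b * real b ^ n / real b ^ Suc n \<le> real b * PP b \<beta> p J / real b ^ J"
    unfolding n using PP_lower[OF b p, where \<beta>=\<beta> and n=n] b by (intro divide_right_mono mult_left_mono) auto
  moreover have "real b * real b ^ n / real b ^ Suc n = 1" using b by simp
  ultimately show ?thesis unfolding LL_def by simp
qed


lemma inv_pow_lim:
  assumes "b \<ge> (2::nat)"
  shows "(\<lambda>n. 1 / real b ^ n) \<longlonglongrightarrow> 0"
proof -
  have "(\<lambda>n. (1 / real b) ^ n) \<longlonglongrightarrow> 0" using assms by (intro LIMSEQ_power_zero) auto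
  then show ?thesis by (simp add: power_one_over)
qed

lemma main_lim:
  assumes b: "b \<ge> 2" and t: "t \<ge> 0"
  shows "(\<lambda>n. real (nat \<lfloor>t * real b ^ n\<rfloor> div b ^ J) * PP b \<beta> p J / real b ^ (n - 1)) \<longlonglongrightarrow> t * LL b \<beta> p J"
proof -
  define K where "K n = nat \<lfloor>t * real b ^ n\<rfloor>" for n
  have bpos: "real b > 0" using b by simp
  have K1: "real (K n) \<le> t * real b ^ n" for n unfolding K_def using t by simp
  have K2: "real (K n) \<ge> t * real b ^ n - 1" for n unfolding K_def using t by linarith
  define u where "u n = real (K n div b ^ J) / real b ^ n" for n
  have du1: "real (m div N) \<le> real m / real N" for m N :: nat
    by (rule of_nat_div_le_of_nat)
  have du2: "real (m div N) \<ge> real m / real N - 1" if "N > 0" for m N :: nat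
  proof -
    have "m < (m div N + 1) * N" using that by (metis div_less_iff_less_mult less_add_one)
    then have "real m < (real (m div N) + 1) * real N" by (metis of_nat_1 of_nat_add of_nat_less_iff of_nat_mult)
    then have "real m / real N < real (m div N) + 1" using that by (simp add: divide_less_eq)
    then show ?thesis by simp
  qed
  have up: "u n \<le> t / real b ^ J" for n
  proof -
    have "u n \<le> real (K n) / real (b ^ J) / real b ^ n" unfolding u_def
      by (intro divide_right_mono du1) simp
    also have "\<dots> \<le> t * real b ^ n / real b ^ J / real b ^ n"
      using K1[of n] bpos by (intro divide_right_mono) (auto intro!: divide_right_mono)
    also have "\<dots> = t / real b ^ J" using bpos by simp
    finally show ?thesis .
  qed
  have lo: "u n \<ge> t / real b ^ J - 1 / real b ^ J * (1 / real b ^ n) - 1 / real b ^ n" for n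
  proof -
    have "u n \<ge> (real (K n) / real (b ^ J) - 1) / real b ^ n" unfolding u_def
      by (intro divide_right_mono du2) (use b in auto)
    moreover have "(real (K n) / real (b ^ J) - 1) / real b ^ n \<ge> ((t * real b ^ n - 1) / real b ^ J - 1) / real b ^ n"
      using K2[of n] bpos by (intro divide_right_mono diff_right_mono) (auto intro!: divide_right_mono)
    moreover have "((t * real b ^ n - 1) / real b ^ J - 1) / real b ^ n = t / real b ^ J - 1 / real b ^ J * (1 / real b ^ n) - 1 / real b ^ n"
      using bpos by (simp add: diff_divide_distrib)
    ultimately show ?thesis by simp
  qed
  have ulim: "u \<longlonglongrightarrow> t / real b ^ J"
  proof (rule tendsto_sandwich[OF always_eventually always_eventually])
    show "\<forall>n. t / real b ^ J - 1 / real b ^ J * (1 / real b ^ n) - 1 / real b ^ n \<le> u n" using lo by simp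
    show "\<forall>n. u n \<le> t / real b ^ J" using up by simp
    show "(\<lambda>n. t / real b ^ J) \<longlonglongrightarrow> t / real b ^ J" by simp
    have "(\<lambda>n. t / real b ^ J - 1 / real b ^ J * (1 / real b ^ n) - 1 / real b ^ n) \<longlonglongrightarrow> t / real b ^ J - 1 / real b ^ J * 0 - 0"
      by (intro tendsto_intros inv_pow_lim[OF b])
    then show "(\<lambda>n. t / real b ^ J - 1 / real b ^ J * (1 / real b ^ n) - 1 / real b ^ n) \<longlonglongrightarrow> t / real b ^ J" by simp
  qed
  have "(\<lambda>n. real b * PP b \<beta> p J * u n) \<longlonglongrightarrow> real b * PP b \<beta> p J * (t / real b ^ J)"
    by (intro tendsto_intros ulim)
  moreover have "real b * PP b \<beta> p J * (t / real b ^ J) = t * LL b \<beta> p J" unfolding LL_def by simp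
  ultimately have lim1: "(\<lambda>n. real b * PP b \<beta> p J * u n) \<longlonglongrightarrow> t * LL b \<beta> p J" by simp
  have ev: "eventually (\<lambda>n. real b * PP b \<beta> p J * u n = real (K n div b ^ J) * PP b \<beta> p J / real b ^ (n - 1)) sequentially"
    using eventually_ge_at_top[of 1]
  proof eventually_elim
    case (elim n)
    then obtain m where n: "n = Suc m" by (cases n) auto
    show ?case unfolding u_def n using bpos by simp
  qed
  show ?thesis unfolding K_def[symmetric] by (rule Lim_transform_eventually[OF lim1 ev])
qed


lemma S_lim:
  assumes b: "b \<ge> 2" and \<beta>: "0 \<le> \<beta>" "\<beta> < 1" and p: "p \<ge> 1" and t: "t \<ge> 0"
    and Lb: "\<And>J. \<bar>LL b \<beta> p J - L\<bar> \<le> real b * (p * (1 / (1 - \<beta>)) powr (p - 1)) * (\<beta> ^ J / (1 - \<beta>))"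
  shows "(\<lambda>n. (\<Sum>k<nat \<lfloor>t * real b ^ n\<rfloor>. \<bar>XX b \<beta> n k\<bar> powr p) / real b ^ (n - 1)) \<longlonglongrightarrow> t * L"
proof (rule LIMSEQ_I)
  fix r :: real assume r: "r > 0"
  define Lc where "Lc = p * (1 / (1 - \<beta>)) powr (p - 1)"
  define Mp where "Mp = (1 / (1 - \<beta>)) powr p"
  define c where "c = real b * Lc / (1 - \<beta>)"
  define K where "K n = nat \<lfloor>t * real b ^ n\<rfloor>" for n
  define S where "S n = (\<Sum>k<K n. \<bar>XX b \<beta> n k\<bar> powr p) / real b ^ (n - 1)" for n
  define main where "main J n = real (K n div b ^ J) * PP b \<beta> p J / real b ^ (n - 1)" for J n
  have bpos: "real b > 0" using b by simp
  have c0: "c \<ge> 0" unfolding c_def Lc_def using \<beta> p by simp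
  have Mp0: "Mp \<ge> 0" unfolding Mp_def by simp
  have Lb': "\<bar>LL b \<beta> p J - L\<bar> \<le> c * \<beta> ^ J" for J
    using Lb[of J] unfolding c_def Lc_def by (simp add: field_simps)
  have est: "\<bar>S n - main J n\<bar> \<le> t * c * \<beta> ^ J + real b ^ (J + 1) * Mp * (1 / real b ^ n)" if J: "J \<le> n" for J n
  proof -
    have bn1: "real b ^ (n - 1) > 0" using bpos by simp
    have "\<bar>S n - main J n\<bar> = \<bar>(\<Sum>k<K n. \<bar>XX b \<beta> n k\<bar> powr p) - real (K n div b ^ J) * PP b \<beta> p J\<bar> / real b ^ (n - 1)"
      unfolding S_def main_def using bn1 by (simp add: diff_divide_distrib[symmetric] abs_divide)
    also have "\<dots> \<le> (real (K n) * Lc * (\<beta> ^ J / (1 - \<beta>)) + real b ^ J * Mp) / real b ^ (n - 1)"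
      by (intro divide_right_mono S_est[OF b \<beta> p J, unfolded Lc_def[symmetric] Mp_def[symmetric]]) simp
    also have "\<dots> = real (K n) / real b ^ (n - 1) * (Lc * (\<beta> ^ J / (1 - \<beta>))) + real b ^ J * Mp * (1 / real b ^ (n - 1))"
      by (simp add: add_divide_distrib) (simp add: ac_simps)
    also have "\<dots> \<le> (t * real b) * (Lc * (\<beta> ^ J / (1 - \<beta>))) + real b ^ J * Mp * (real b / real b ^ n)"
    proof (intro add_mono mult_right_mono mult_left_mono)
      show "real (K n) / real b ^ (n - 1) \<le> t * real b"
      proof (cases n)
        case 0
        have "real (K 0) \<le> t" unfolding K_def using t by simp
        moreover have "t * 1 \<le> t * real b" using t b by (intro mult_left_mono) auto
        ultimately show ?thesis unfolding 0 by simp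
      next
        case (Suc m)
        have "real (K n) \<le> t * real b ^ n" unfolding K_def using t by simp
        then show ?thesis unfolding Suc using bpos by (simp add: divide_le_eq algebra_simps)
      qed
      show "1 / real b ^ (n - 1) \<le> real b / real b ^ n"
      proof (cases n)
        case 0 then show ?thesis using b by simp
      next
        case (Suc m) then show ?thesis using bpos by simp
      qed
    qed (use \<beta> p Mp0 in \<open>auto simp: Lc_def\<close>)
    also have "\<dots> = t * c * \<beta> ^ J + real b ^ (J + 1) * Mp * (1 / real b ^ n)"
      unfolding c_def using \<beta> by (simp add: field_simps)
    finally show ?thesis .
  qed
  have "(\<lambda>J. 2 * t * c * \<beta> ^ J) \<longlonglongrightarrow> 2 * t * c * 0"
    using \<beta> by (intro tendsto_intros LIMSEQ_power_zero) auto
  then have "eventually (\<lambda>J. 2 * t * c * \<beta> ^ J < r / 2) sequentially"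
    by (rule order_tendstoD) (use r in simp)
  then obtain J where J: "2 * t * c * \<beta> ^ J < r / 2" by (auto simp: eventually_sequentially)
  have ev1: "eventually (\<lambda>n. \<bar>main J n - t * LL b \<beta> p J\<bar> < r / 4) sequentially"
  proof -
    have "(\<lambda>n. main J n) \<longlonglongrightarrow> t * LL b \<beta> p J"
      unfolding main_def K_def by (rule main_lim[OF b t])
    then have "(\<lambda>n. main J n - t * LL b \<beta> p J) \<longlonglongrightarrow> 0"
      by (simp add: LIM_zero)
    then have "(\<lambda>n. \<bar>main J n - t * LL b \<beta> p J\<bar>) \<longlonglongrightarrow> 0"
      by (simp add: tendsto_rabs_zero)
    then show ?thesis by (rule order_tendstoD) (use r in simp)
  qed
  have ev2: "eventually (\<lambda>n. real b ^ (J + 1) * Mp * (1 / real b ^ n) < r / 4) sequentially"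
  proof -
    have "(\<lambda>n. real b ^ (J + 1) * Mp * (1 / real b ^ n)) \<longlonglongrightarrow> real b ^ (J + 1) * Mp * 0"
      by (intro tendsto_intros inv_pow_lim[OF b])
    then show ?thesis by (rule order_tendstoD) (use r in simp)
  qed
  from eventually_conj[OF eventually_ge_at_top[of J] eventually_conj[OF ev1 ev2]]
  obtain N where N: "\<And>n. n \<ge> N \<Longrightarrow> J \<le> n \<and> \<bar>main J n - t * LL b \<beta> p J\<bar> < r / 4 \<and> real b ^ (J + 1) * Mp * (1 / real b ^ n) < r / 4"
    by (auto simp: eventually_sequentially)
  show "\<exists>no. \<forall>n\<ge>no. norm ((\<Sum>k<nat \<lfloor>t * real b ^ n\<rfloor>. \<bar>XX b \<beta> n k\<bar> powr p) / real b ^ (n - 1) - t * L) < r"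
  proof (intro exI allI impI)
    fix n assume n: "n \<ge> N"
    have "\<bar>S n - t * L\<bar> \<le> \<bar>S n - main J n\<bar> + \<bar>main J n - t * LL b \<beta> p J\<bar> + t * \<bar>LL b \<beta> p J - L\<bar>"
    proof -
      have "t * \<bar>LL b \<beta> p J - L\<bar> = \<bar>t * LL b \<beta> p J - t * L\<bar>" using t by (simp add: right_diff_distrib[symmetric] abs_mult)
      then show ?thesis by linarith
    qed
    also have "\<dots> < (t * c * \<beta> ^ J + r / 4) + r / 4 + t * (c * \<beta> ^ J)"
    proof -
      have Nn: "J \<le> n" "\<bar>main J n - t * LL b \<beta> p J\<bar> < r / 4" "real b ^ (J + 1) * Mp * (1 / real b ^ n) < r / 4"
        using N[OF n] by auto
      have e1: "\<bar>S n - main J n\<bar> < t * c * \<beta> ^ J + r / 4" using est[OF Nn(1)] Nn(3) by linarith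
      have e2: "t * \<bar>LL b \<beta> p J - L\<bar> \<le> t * (c * \<beta> ^ J)" using Lb'[of J] t by (rule mult_left_mono)
      show ?thesis using e1 Nn(2) e2 by linarith
    qed
    also have "\<dots> \<le> r"
    proof -
      have "t * c * \<beta> ^ J = t * (c * \<beta> ^ J)" by simp
      then show ?thesis using J by linarith
    qed
    finally show "norm ((\<Sum>k<nat \<lfloor>t * real b ^ n\<rfloor>. \<bar>XX b \<beta> n k\<bar> powr p) / real b ^ (n - 1) - t * L) < r"
      unfolding S_def K_def by simp
  qed
qed



definition gg :: "nat \<Rightarrow> real \<Rightarrow> real" where "gg b z = max 0 (1 - \<bar>real b * z - 1\<bar>)"
definition psi :: "nat \<Rightarrow> real \<Rightarrow> real" where "psi b y = gg b (frac y)"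

lemma gg_0: "gg b 0 = 0" by (simp add: gg_def)
lemma gg_1: "b \<ge> 1 \<Longrightarrow> b \<le> 2 \<or> b \<ge> 2 \<Longrightarrow> b \<ge> 2 \<Longrightarrow> gg b 1 = 0" by (simp add: gg_def)

lemma psi_bounds: "b \<ge> 2 \<Longrightarrow> 0 \<le> psi b y \<and> psi b y \<le> 1"
  unfolding psi_def gg_def by auto

lemma psi_nat: "psi b (real n) = 0"
proof -
  have "frac (real n) = 0" using frac_of_int[of "int n"] by simp
  then show ?thesis unfolding psi_def by (simp only: gg_0)
qed

lemma frac_grid:
  assumes "b > 0"
  shows "frac (real k / real b ^ N) = real (k mod b ^ N) / real b ^ N"
proof (subst frac_unique_iff, intro conjI)
  have bN: "real b ^ N > 0" using assms by simp
  have "k = k div b ^ N * b ^ N + k mod b ^ N" by (rule div_mult_mod_eq[symmetric])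
  then have "real k = real (k div b ^ N) * real b ^ N + real (k mod b ^ N)"
    by (metis of_nat_add of_nat_mult of_nat_power)
  then have "real k / real b ^ N - real (k mod b ^ N) / real b ^ N = real (k div b ^ N)"
    using bN by (simp add: field_simps)
  then show "real k / real b ^ N - real (k mod b ^ N) / real b ^ N \<in> \<int>" by simp
  show "0 \<le> real (k mod b ^ N) / real b ^ N" by simp
  have "k mod b ^ N < b ^ N" using assms by simp
  then have "real (k mod b ^ N) < real b ^ N" by (metis of_nat_less_iff of_nat_power)
  then show "real (k mod b ^ N) / real b ^ N < 1" using bN by simp
qed


lemma G_inc:
  fixes w w' B :: real and i :: nat
  assumes B: "B > 0" and w: "real i \<le> w" "w < real i + 1" and w': "w' = w + 1 / B" "w' \<le> real i + 1"
  shows "max 0 (1 - \<bar>w' - 1\<bar>) - max 0 (1 - \<bar>w - 1\<bar>) = dl i / B"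
proof -
  consider "i = 0" | "i = 1" | "i \<ge> 2" by linarith
  then show ?thesis
  proof cases
    case 1
    then have "0 \<le> w" "w' \<le> 1" using w w' by auto
    then have "max 0 (1 - \<bar>w' - 1\<bar>) = w'" "max 0 (1 - \<bar>w - 1\<bar>) = w"
      using w' B by (auto simp: abs_if) (smt (verit) divide_pos_pos)+
    then show ?thesis using 1 w' by (simp add: dl_def)
  next
    case 2
    then have "1 \<le> w" "w' \<le> 2" using w w' by auto
    moreover have "w' \<ge> 1" using \<open>1 \<le> w\<close> w' B by (smt (verit) divide_pos_pos)
    ultimately have "max 0 (1 - \<bar>w' - 1\<bar>) = 2 - w'" "max 0 (1 - \<bar>w - 1\<bar>) = 2 - w"
      using w w' 2 by (auto simp: abs_if)
    then show ?thesis using 2 w' by (simp add: dl_def)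
  next
    case 3
    then have "real 2 \<le> real i" by (simp only: of_nat_le_iff)
    then have "2 \<le> w" using w by simp
    moreover have "w' \<ge> w" using w' B by simp
    ultimately have "max 0 (1 - \<bar>w' - 1\<bar>) = 0" "max 0 (1 - \<bar>w - 1\<bar>) = 0" by auto
    then show ?thesis using 3 by (simp add: dl_def)
  qed
qed

lemma psi_inc:
  assumes b: "b \<ge> 2"
  shows "psi b (real (Suc k) / real b ^ Suc N) - psi b (real k / real b ^ Suc N) = 1 / real b ^ N * dl (dg b N k)"
proof -
  have bpos: "b > 0" using b by simp
  define B where "B = b ^ N"
  define \<rho> where "\<rho> = k mod b ^ Suc N"
  define i where "i = \<rho> div B"
  have BbN: "b ^ Suc N = B * b" unfolding B_def by simp
  have Bpos: "B > 0" unfolding B_def using bpos by simp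
  have rB: "real b ^ Suc N = real B * real b" unfolding B_def by simp
  have i_dg: "i = dg b N k" unfolding i_def \<rho>_def dg_def BbN B_def[symmetric] mod_mult2_eq using Bpos by simp
  have gg_eq: "gg b (real x / real b ^ Suc N) = max 0 (1 - \<bar>real x / real B - 1\<bar>)" for x
    unfolding gg_def rB using bpos by simp
  have rho_lt: "\<rho> < b ^ Suc N" unfolding \<rho>_def using bpos by simp
  have p1: "psi b (real k / real b ^ Suc N) = gg b (real \<rho> / real b ^ Suc N)"
    unfolding psi_def frac_grid[OF bpos] \<rho>_def ..
  have p2: "psi b (real (Suc k) / real b ^ Suc N) = gg b (real (Suc \<rho>) / real b ^ Suc N)"
  proof -
    have "psi b (real (Suc k) / real b ^ Suc N) = gg b (real (Suc k mod b ^ Suc N) / real b ^ Suc N)"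
      unfolding psi_def frac_grid[OF bpos] ..
    also have "\<dots> = gg b (real (Suc \<rho>) / real b ^ Suc N)"
    proof (cases "Suc \<rho> = b ^ Suc N")
      case True
      then have "Suc k mod b ^ Suc N = 0" unfolding \<rho>_def by (simp add: mod_Suc)
      moreover have "real (Suc \<rho>) / real b ^ Suc N = 1" using True bpos by (metis of_nat_power divide_self of_nat_eq_0_iff power_not_zero not_gr0)
      ultimately show ?thesis using b by (simp add: gg_0 gg_def)
    next
      case False
      then have "Suc k mod b ^ Suc N = Suc \<rho>" unfolding \<rho>_def by (simp add: mod_Suc)
      then show ?thesis by simp
    qed
    finally show ?thesis .
  qed
  have rho_dec: "\<rho> = i * B + \<rho> mod B" unfolding i_def by simp
  have rm: "\<rho> mod B < B" using Bpos by simp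
  have "Suc \<rho> \<le> (i + 1) * B" using rho_dec rm by (simp add: algebra_simps)
  then have s1: "real (Suc \<rho>) \<le> (real i + 1) * real B" by (metis of_nat_1 of_nat_add of_nat_le_iff of_nat_mult)
  have s2: "real i * real B \<le> real \<rho>" using rho_dec by (metis le_add1 of_nat_le_iff of_nat_mult)
  have s3: "real \<rho> < (real i + 1) * real B" using rho_dec rm
    by (metis add_mult_distrib mult_1 nat_add_left_cancel_less of_nat_1 of_nat_add of_nat_less_iff of_nat_mult)
  have rBpos: "real B > 0" using Bpos by simp
  have "max 0 (1 - \<bar>real (Suc \<rho>) / real B - 1\<bar>) - max 0 (1 - \<bar>real \<rho> / real B - 1\<bar>) = dl i / real B"
  proof (rule G_inc[OF rBpos])
    show "real i \<le> real \<rho> / real B" using s2 rBpos by (simp add: le_divide_eq)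
    show "real \<rho> / real B < real i + 1" using s3 rBpos by (simp add: divide_less_eq)
    show "real (Suc \<rho>) / real B = real \<rho> / real B + 1 / real B" by (simp add: add_divide_distrib)
    show "real (Suc \<rho>) / real B \<le> real i + 1" using s1 rBpos by (simp add: divide_le_eq)
  qed
  then show ?thesis unfolding p1 p2 gg_eq i_dg B_def by simp
qed


definition alph :: "nat \<Rightarrow> real \<Rightarrow> real" where "alph b p = real b powr (- 1 / p)"
definition bet :: "nat \<Rightarrow> real \<Rightarrow> real" where "bet b p = real b powr (1 / p) / real b"
definition ff :: "nat \<Rightarrow> real \<Rightarrow> real \<Rightarrow> real" where
  "ff b p x = 1 / (1 - alph b p) + 1 + (\<Sum>m. alph b p ^ m * psi b (real b ^ m * x))"

lemma alph_bounds:
  assumes b: "b \<ge> 2" and p: "p > 1"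
  shows "0 < alph b p" "alph b p < 1"
proof -
  show "0 < alph b p" unfolding alph_def using b by simp
  show "alph b p < 1" unfolding alph_def using b p by (intro powr_less_one) auto
qed

lemma bet_bounds:
  assumes b: "b \<ge> 2" and p: "p > 1"
  shows "0 \<le> bet b p" "bet b p < 1"
proof -
  show "0 \<le> bet b p" unfolding bet_def by simp
  have "real b powr (1 / p) < real b powr 1" using b p by (intro powr_less_mono) auto
  then show "bet b p < 1" unfolding bet_def using b by simp
qed

lemma alph_bet: 
  assumes b: "b \<ge> 2" and p: "p > 1"
  shows "alph b p ^ j * bet b p ^ j * real b ^ j = 1"
proof -
  have "alph b p * bet b p * real b = real b powr (- 1 / p) * real b powr (1 / p)"
    unfolding alph_def bet_def using b by simp
  also have "\<dots> = 1" using b by (simp add: powr_add[symmetric])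
  finally have "alph b p * bet b p * real b = 1" .
  then have "(alph b p * bet b p * real b) ^ j = 1" by simp
  then show ?thesis by (simp add: power_mult_distrib)
qed

lemma ff_summable:
  assumes b: "b \<ge> 2" and p: "p > 1"
  shows "summable (\<lambda>m. alph b p ^ m * psi b (real b ^ m * x))"
proof (rule summable_comparison_test'[where g="\<lambda>m. alph b p ^ m" and N=0])
  show "summable (\<lambda>m. alph b p ^ m)" using alph_bounds[OF b p] by (intro summable_geometric) simp
  fix m show "norm (alph b p ^ m * psi b (real b ^ m * x)) \<le> alph b p ^ m"
    using alph_bounds[OF b p] psi_bounds[OF b] by (simp add: abs_mult mult_left_le)
qed

lemma ff_ge1:
  assumes b: "b \<ge> 2" and p: "p > 1"
  shows "ff b p x \<ge> 1"
proof -
  have "(\<Sum>m. alph b p ^ m * psi b (real b ^ m * x)) \<ge> 0"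
    using ff_summable[OF b p] alph_bounds[OF b p] psi_bounds[OF b] by (intro suminf_nonneg) auto
  moreover have "1 / (1 - alph b p) \<ge> 0" using alph_bounds[OF b p] by simp
  ultimately show ?thesis unfolding ff_def by simp
qed

lemma ff_grid:
  assumes b: "b \<ge> 2" and p: "p > 1"
  shows "ff b p (real k / real b ^ n) = 1 / (1 - alph b p) + 1 + (\<Sum>m<n. alph b p ^ m * psi b (real k / real b ^ (n - m)))"
proof -
  have bpos: "real b > 0" using b by simp
  have "(\<Sum>m. alph b p ^ m * psi b (real b ^ m * (real k / real b ^ n))) = (\<Sum>m<n. alph b p ^ m * psi b (real b ^ m * (real k / real b ^ n)))"
  proof (rule suminf_finite)
    fix m assume "m \<notin> {..<n}"
    then have mn: "m \<ge> n" by simp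
    have eqm: "real b ^ m * (real k / real b ^ n) = real (k * b ^ (m - n))"
    proof -
      have "real b ^ m = real b ^ (m - n) * real b ^ n" using mn by (simp flip: power_add)
      then show ?thesis using bpos by simp
    qed
    show "alph b p ^ m * psi b (real b ^ m * (real k / real b ^ n)) = 0" unfolding eqm psi_nat by simp
  qed simp
  also have "\<dots> = (\<Sum>m<n. alph b p ^ m * psi b (real k / real b ^ (n - m)))"
  proof (intro sum.cong refl)
    fix m assume "m \<in> {..<n}"
    then have "real b ^ n = real b ^ m * real b ^ (n - m)" by (simp flip: power_add)
    then have "real b ^ m * (real k / real b ^ n) = real k / real b ^ (n - m)" using bpos by simp
    then show "alph b p ^ m * psi b (real b ^ m * (real k / real b ^ n)) = alph b p ^ m * psi b (real k / real b ^ (n - m))"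
      by simp
  qed
  finally show ?thesis unfolding ff_def by simp
qed

lemma ff_inc:
  assumes b: "b \<ge> 2" and p: "p > 1"
  shows "ff b p (real (Suc k) / real b ^ n) - ff b p (real k / real b ^ n) = alph b p ^ (n - 1) * XX b (bet b p) n k"
proof -
  define a where "a = alph b p"
  define be where "be = bet b p"
  have bpos: "real b > 0" using b by simp
  have "ff b p (real (Suc k) / real b ^ n) - ff b p (real k / real b ^ n)
      = (\<Sum>m<n. a ^ m * (psi b (real (Suc k) / real b ^ (n - m)) - psi b (real k / real b ^ (n - m))))"
    unfolding ff_grid[OF b p] a_def by (simp add: sum_subtractf[symmetric] right_diff_distrib)
  also have "\<dots> = (\<Sum>m<n. a ^ m * (1 / real b ^ (n - m - 1) * dl (dg b (n - m - 1) k)))"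
  proof (intro sum.cong refl)
    fix m assume "m \<in> {..<n}"
    then have e: "n - m = Suc (n - m - 1)" by simp
    show "a ^ m * (psi b (real (Suc k) / real b ^ (n - m)) - psi b (real k / real b ^ (n - m)))
        = a ^ m * (1 / real b ^ (n - m - 1) * dl (dg b (n - m - 1) k))"
      by (subst (1 2) e) (simp only: psi_inc[OF b])
  qed
  also have "\<dots> = (\<Sum>j<n. a ^ (n - Suc j) * (1 / real b ^ (n - (n - Suc j) - 1) * dl (dg b (n - (n - Suc j) - 1) k)))"
    by (rule sum.nat_diff_reindex[symmetric])
  also have "\<dots> = (\<Sum>j<n. a ^ (n - 1) * (be ^ j * dl (dg b j k)))"
  proof (intro sum.cong refl)
    fix j assume j: "j \<in> {..<n}"
    then have e1: "n - (n - Suc j) - 1 = j" by simp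
    have e2: "a ^ (n - 1) = a ^ (n - Suc j) * a ^ j" using j by (simp flip: power_add)
    have ab: "a ^ j * be ^ j * real b ^ j = 1" unfolding a_def be_def by (rule alph_bet[OF b p])
    have "a ^ (n - 1) * be ^ j = a ^ (n - Suc j) * (a ^ j * be ^ j * real b ^ j) / real b ^ j"
      unfolding e2 using bpos by (simp add: field_simps)
    also have "\<dots> = a ^ (n - Suc j) / real b ^ j" unfolding ab by simp
    finally have h: "a ^ (n - 1) * be ^ j = a ^ (n - Suc j) / real b ^ j" .
    have "a ^ (n - 1) * (be ^ j * dl (dg b j k)) = (a ^ (n - 1) * be ^ j) * dl (dg b j k)" by (simp only: mult.assoc)
    also have "\<dots> = a ^ (n - Suc j) / real b ^ j * dl (dg b j k)" by (simp only: h)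
    also have "\<dots> = a ^ (n - Suc j) * (1 / real b ^ j * dl (dg b j k))" by simp
    finally show "a ^ (n - Suc j) * (1 / real b ^ (n - (n - Suc j) - 1) * dl (dg b (n - (n - Suc j) - 1) k))
        = a ^ (n - 1) * (be ^ j * dl (dg b j k))"
      unfolding e1 by simp
  qed
  also have "\<dots> = a ^ (n - 1) * XX b be n k" unfolding XX_def by (simp add: sum_distrib_left)
  finally show ?thesis unfolding a_def be_def .
qed

lemma alph_pow_powr:
  assumes b: "b \<ge> 2" and p: "p > 1"
  shows "(alph b p ^ m) powr p = 1 / real b ^ m"
proof -
  have bpos: "real b > 0" using b by simp
  have "alph b p ^ m = real b powr (real m * (- 1 / p))"
    unfolding alph_def using bpos by (simp add: powr_power)
  then have "(alph b p ^ m) powr p = real b powr (real m * (- 1 / p) * p)" by (simp add: powr_powr)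
  also have "real m * (- 1 / p) * p = - real m" using p by simp
  also have "real b powr (- real m) = 1 / real b ^ m" using bpos by (simp add: powr_minus powr_realpow divide_inverse)
  finally show ?thesis .
qed

lemma ff_pvar_sum:
  assumes b: "b \<ge> 2" and p: "p > 1" and n: "n \<ge> 1"
  shows "badic_pvar_sum b p (ff b p) t n = (\<Sum>k<nat \<lfloor>t * real b ^ n\<rfloor>. \<bar>XX b (bet b p) n k\<bar> powr p) / real b ^ (n - 1)"
proof -
  have "badic_pvar_sum b p (ff b p) t n = (\<Sum>k<nat \<lfloor>t * real b ^ n\<rfloor>. \<bar>alph b p ^ (n - 1) * XX b (bet b p) n k\<bar> powr p)"
    unfolding badic_pvar_sum_def ff_inc[OF b p] ..
  also have "\<dots> = (\<Sum>k<nat \<lfloor>t * real b ^ n\<rfloor>. (alph b p ^ (n - 1)) powr p * \<bar>XX b (bet b p) n k\<bar> powr p)"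
    using alph_bounds[OF b p] by (intro sum.cong refl) (simp add: abs_mult powr_mult)
  also have "\<dots> = (\<Sum>k<nat \<lfloor>t * real b ^ n\<rfloor>. \<bar>XX b (bet b p) n k\<bar> powr p) / real b ^ (n - 1)"
    unfolding alph_pow_powr[OF b p] by (simp add: sum_divide_distrib)
  finally show ?thesis .
qed



lemma ff_var:
  assumes b: "b \<ge> 2" and p: "p > 1"
  obtains L where "L \<ge> 1" "\<And>t. t \<ge> 0 \<Longrightarrow> has_badic_pvar b p (ff b p) t (t * L)"
proof -
  have p1: "p \<ge> 1" using p by simp
  note bb = bet_bounds[OF b p]
  obtain L where L: "LL b (bet b p) p \<longlonglongrightarrow> L"
    and Lb: "\<And>J. \<bar>LL b (bet b p) p J - L\<bar> \<le> real b * (p * (1 / (1 - bet b p)) powr (p - 1)) * (bet b p ^ J / (1 - bet b p))"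
    using LL_conv[OF b bb p1] by blast
  have L1: "L \<ge> 1"
    by (rule LIMSEQ_le_const[OF L]) (use LL_lower[OF b] p in \<open>auto intro!: exI[of _ 1]\<close>)
  have "has_badic_pvar b p (ff b p) t (t * L)" if t: "t \<ge> 0" for t
    unfolding has_badic_pvar_def
  proof (rule Lim_transform_eventually[OF S_lim[OF b bb p1 t Lb]])
    show "\<forall>\<^sub>F n in sequentially. (\<Sum>k<nat \<lfloor>t * real b ^ n\<rfloor>. \<bar>XX b (bet b p) n k\<bar> powr p) / real b ^ (n - 1)
        = badic_pvar_sum b p (ff b p) t n"
      using eventually_ge_at_top[of 1] by eventually_elim (simp add: ff_pvar_sum[OF b p])
  qed
  then show ?thesis using that L1 by blast
qed

lemma pvar_scale:
  "badic_pvar_sum b p (\<lambda>t. f t * c) t n = \<bar>c\<bar> powr p * badic_pvar_sum b p f t n"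
  unfolding badic_pvar_sum_def sum_distrib_left
proof (intro sum.cong refl)
  fix k
  have "\<bar>f (real (Suc k) / real b ^ n) * c - f (real k / real b ^ n) * c\<bar>
      = \<bar>c\<bar> * \<bar>f (real (Suc k) / real b ^ n) - f (real k / real b ^ n)\<bar>"
    by (simp add: left_diff_distrib[symmetric] abs_mult)
  then show "\<bar>f (real (Suc k) / real b ^ n) * c - f (real k / real b ^ n) * c\<bar> powr p
      = \<bar>c\<bar> powr p * \<bar>f (real (Suc k) / real b ^ n) - f (real k / real b ^ n)\<bar> powr p"
    by (simp add: powr_mult)
qed

lemma pvar_scale':
  "badic_pvar_sum b p (\<lambda>t. c * f t) t n = \<bar>c\<bar> powr p * badic_pvar_sum b p f t n"
  using pvar_scale[of b p f c t n] by (simp add: mult.commute)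


lemma std_setup:
  defines "N \<equiv> density lborel std_normal_density"
  defines "M \<equiv> distr N (Pi\<^sub>M UNIV (\<lambda>_::nat. borel :: real measure)) (\<lambda>x (_::nat). x)"
  shows "prob_space M" and "(\<lambda>\<omega>. \<omega> (0::nat)) \<in> borel_measurable M"
    and "\<And>c. centered_gaussian_rv M (\<lambda>\<omega>. c * \<omega> 0)"
    and "integral\<^sup>L M (\<lambda>\<omega>. (\<omega> 0)^2) = 1"
    and "AE \<omega> in M. \<omega> 0 \<noteq> 0"
proof -
  have PN: "prob_space N" unfolding N_def by (rule prob_space_normal_density) simp
  have emb: "(\<lambda>x (_::nat). x) \<in> measurable N (Pi\<^sub>M UNIV (\<lambda>_::nat. borel :: real measure))"
    unfolding N_def
  proof -
    have "(\<lambda>x (i::nat). (\<lambda>i x. x) i x) \<in> measurable (density lborel std_normal_density) (Pi\<^sub>M UNIV (\<lambda>_::nat. borel :: real measure))"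
      by (rule measurable_PiM_single') auto
    then show "(\<lambda>x (_::nat). x) \<in> measurable (density lborel std_normal_density) (Pi\<^sub>M UNIV (\<lambda>_::nat. borel :: real measure))" by simp
  qed
  show PM: "prob_space M" unfolding M_def by (rule prob_space.prob_space_distr[OF PN emb])
  show Z: "(\<lambda>\<omega>. \<omega> (0::nat)) \<in> borel_measurable M"
    unfolding M_def measurable_distr_eq1 by (rule measurable_component_singleton) simp
  have dZ: "distr M borel (\<lambda>\<omega>. c * \<omega> 0) = distr N borel (\<lambda>x. c * x)" for c
  proof -
    have g: "(\<lambda>\<omega>. c * \<omega> (0::nat)) \<in> borel_measurable (Pi\<^sub>M UNIV (\<lambda>_::nat. borel :: real measure))"
      by (intro borel_measurable_times borel_measurable_const measurable_component_singleton) simp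
    show ?thesis unfolding M_def distr_distr[OF g emb] by (simp add: comp_def)
  qed
  show "centered_gaussian_rv M (\<lambda>\<omega>. c * \<omega> 0)" for c
  proof (cases "c = 0")
    case True
    have "distr M borel (\<lambda>\<omega>. c * \<omega> 0) = return borel 0"
      using True prob_space.distr_const[OF PM, of 0 borel] by simp
    then show ?thesis unfolding centered_gaussian_rv_def using Z
      by (intro conjI exI[of _ 0]) auto
  next
    case False
    interpret N: prob_space N by (rule PN)
    have D0: "distributed N lborel (\<lambda>x. x) std_normal_density"
      unfolding distributed_def N_def by (auto simp: distr_id2)
    have "distributed N lborel (\<lambda>x. 0 + c * x) (normal_density (0 + c * 0) (\<bar>c\<bar> * 1))"
      by (rule N.normal_density_affine[OF D0]) (use False in auto)
    then have "distr N lborel (\<lambda>x. c * x) = density lborel (normal_density 0 \<bar>c\<bar>)"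
      unfolding distributed_def by simp
    moreover have "distr N borel (\<lambda>x. c * x) = distr N lborel (\<lambda>x. c * x)"
      by (rule distr_cong) auto
    ultimately have "distr M borel (\<lambda>\<omega>. c * \<omega> 0) = density lborel (normal_density 0 \<bar>c\<bar>)"
      using dZ by simp
    then show ?thesis unfolding centered_gaussian_rv_def using Z False
      by (intro conjI exI[of _ "\<bar>c\<bar>"]) auto
  qed
  show "integral\<^sup>L M (\<lambda>\<omega>. (\<omega> 0)^2) = 1"
  proof -
    have "integral\<^sup>L M (\<lambda>\<omega>. (\<omega> 0)^2) = integral\<^sup>L N (\<lambda>x. x^2)"
    proof -
      have g: "(\<lambda>\<omega>. (\<omega> (0::nat))^2) \<in> borel_measurable (Pi\<^sub>M UNIV (\<lambda>_::nat. borel :: real measure))"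
        by (intro borel_measurable_power measurable_component_singleton) simp
      show ?thesis unfolding M_def integral_distr[OF emb g] by simp
    qed
    also have "\<dots> = integral\<^sup>L lborel (\<lambda>x. std_normal_density x * x^2)"
      unfolding N_def by (subst integral_density) auto
    also have "\<dots> = 1" using integral_std_normal_moment_even[of 1] by simp
    finally show ?thesis .
  qed
  show "AE \<omega> in M. \<omega> 0 \<noteq> 0"
  proof -
    have "AE x in N. x \<noteq> 0"
      unfolding N_def by (subst AE_density) (auto intro: AE_lborel_singleton[THEN AE_mp])
    moreover have S: "{x \<in> space (Pi\<^sub>M UNIV (\<lambda>_::nat. borel :: real measure)). x 0 \<noteq> 0} \<in> sets (Pi\<^sub>M UNIV (\<lambda>_::nat. borel :: real measure))"
    proof -
      have g: "(\<lambda>\<omega>. \<omega> (0::nat)) \<in> borel_measurable (Pi\<^sub>M UNIV (\<lambda>_::nat. borel :: real measure))"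
        by (rule measurable_component_singleton) simp
      show ?thesis using g by measurable
    qed
    ultimately show ?thesis unfolding M_def by (subst AE_distr_iff[OF emb S]) simp
  qed
qed


lemma part_a:
  fixes p :: real and b :: nat
  assumes p: "p > 1" and b: "b \<ge> 2"
  shows "\<exists>(M :: (nat \<Rightarrow> real) measure) Y V.
            prob_space M \<and> centered_gaussian_process M {0..1} Y \<and>
            V \<in> borel_measurable M \<and>
            (AE \<omega> in M. 0 < V \<omega> \<and>
               (\<forall>t\<in>{0..1}. has_badic_pvar b p (\<lambda>t. Y t \<omega>) t (V \<omega> * t))) \<and>
            (\<forall>s\<in>{0<..<1}. \<exists>C. 0 < C \<and>
               (\<forall>t\<in>{0..1}. has_badic_pvar b p (\<lambda>t. integral\<^sup>L M (\<lambda>\<omega>. Y s \<omega> * Y t \<omega>)) t (C * t)))"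
proof -
  obtain L where L1: "L \<ge> 1" and LV: "\<And>t. t \<ge> 0 \<Longrightarrow> has_badic_pvar b p (ff b p) t (t * L)"
    using ff_var[OF b p] by blast
  define M where "M = distr (density lborel std_normal_density) (Pi\<^sub>M UNIV (\<lambda>_::nat. borel :: real measure)) (\<lambda>x (_::nat). x)"
  note S = std_setup[folded M_def]
  define Y where "Y t \<omega> = ff b p t * \<omega> (0::nat)" for t and \<omega> :: "nat \<Rightarrow> real"
  define V where "V \<omega> = \<bar>\<omega> (0::nat)\<bar> powr p * L" for \<omega> :: "nat \<Rightarrow> real"
  have PM: "prob_space M" by (rule S(1))
  have Z: "(\<lambda>\<omega>. \<omega> (0::nat)) \<in> borel_measurable M" by (rule S(2))
  have GP: "centered_gaussian_process M {0..1} Y"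
    unfolding centered_gaussian_process_def
  proof (intro conjI ballI allI impI)
    fix t show "Y t \<in> borel_measurable M" unfolding Y_def[abs_def] using Z by measurable
  next
    fix F :: "real set" and a :: "real \<Rightarrow> real"
    have "(\<lambda>\<omega>. \<Sum>t\<in>F. a t * Y t \<omega>) = (\<lambda>\<omega>. (\<Sum>t\<in>F. a t * ff b p t) * \<omega> 0)"
      unfolding Y_def by (simp add: sum_distrib_right mult.assoc)
    then show "centered_gaussian_rv M (\<lambda>\<omega>. \<Sum>t\<in>F. a t * Y t \<omega>)" using S(3) by simp
  qed
  have Vm: "V \<in> borel_measurable M" unfolding V_def[abs_def] using Z by measurable
  have AEV: "AE \<omega> in M. 0 < V \<omega> \<and> (\<forall>t\<in>{0..1}. has_badic_pvar b p (\<lambda>t. Y t \<omega>) t (V \<omega> * t))"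
    using S(5)
  proof eventually_elim
    case (elim \<omega>)
    have "0 < V \<omega>" unfolding V_def using elim L1 by simp
    moreover have "has_badic_pvar b p (\<lambda>t. Y t \<omega>) t (V \<omega> * t)" if t: "t \<in> {0..1}" for t
    proof -
      have "(\<lambda>n. \<bar>\<omega> 0\<bar> powr p * badic_pvar_sum b p (ff b p) t n) \<longlonglongrightarrow> \<bar>\<omega> 0\<bar> powr p * (t * L)"
        using LV[of t] t unfolding has_badic_pvar_def by (intro tendsto_mult_left) auto
      then show ?thesis unfolding has_badic_pvar_def Y_def pvar_scale V_def by (simp add: mult_ac)
    qed
    ultimately show ?case by blast
  qed
  have COV: "\<exists>C. 0 < C \<and> (\<forall>t\<in>{0..1}. has_badic_pvar b p (\<lambda>t. integral\<^sup>L M (\<lambda>\<omega>. Y s \<omega> * Y t \<omega>)) t (C * t))"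
    if s: "s \<in> {0<..<1}" for s
  proof -
    have cov: "(\<lambda>t. integral\<^sup>L M (\<lambda>\<omega>. Y s \<omega> * Y t \<omega>)) = (\<lambda>t. ff b p s * ff b p t)"
    proof
      fix t
      have "integral\<^sup>L M (\<lambda>\<omega>. Y s \<omega> * Y t \<omega>) = integral\<^sup>L M (\<lambda>\<omega>. (ff b p s * ff b p t) * (\<omega> 0)^2)"
        unfolding Y_def by (simp add: power2_eq_square mult_ac)
      also have "\<dots> = ff b p s * ff b p t" using S(4) by simp
      finally show "integral\<^sup>L M (\<lambda>\<omega>. Y s \<omega> * Y t \<omega>) = ff b p s * ff b p t" .
    qed
    define C where "C = \<bar>ff b p s\<bar> powr p * L"
    have C0: "C > 0" unfolding C_def using ff_ge1[OF b p, of s] L1 by simp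
    have "has_badic_pvar b p (\<lambda>t. ff b p s * ff b p t) t (C * t)" if t: "t \<in> {0..1}" for t
    proof -
      have "(\<lambda>n. \<bar>ff b p s\<bar> powr p * badic_pvar_sum b p (ff b p) t n) \<longlonglongrightarrow> \<bar>ff b p s\<bar> powr p * (t * L)"
        using LV[of t] t unfolding has_badic_pvar_def by (intro tendsto_mult_left) auto
      then show ?thesis unfolding has_badic_pvar_def pvar_scale' C_def by (simp add: mult_ac)
    qed
    then show ?thesis unfolding cov using C0 by blast
  qed
  show ?thesis
    by (rule exI[of _ M], rule exI[of _ Y], rule exI[of _ V]) (use PM GP Vm AEV COV in blast)
qed

theorem corollary2p7:
  fixes p :: real and b :: nat
  assumes "p > 1" and "b \<ge> 2"
  shows "(\<exists>(M :: (nat \<Rightarrow> real) measure) Y V.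
            prob_space M \<and> centered_gaussian_process M {0..1} Y \<and>
            V \<in> borel_measurable M \<and>
            (AE \<omega> in M. 0 < V \<omega> \<and>
               (\<forall>t\<in>{0..1}. has_badic_pvar b p (\<lambda>t. Y t \<omega>) t (V \<omega> * t))) \<and>
            (\<forall>s\<in>{0<..<1}. \<exists>C. 0 < C \<and>
               (\<forall>t\<in>{0..1}. has_badic_pvar b p (\<lambda>t. integral\<^sup>L M (\<lambda>\<omega>. Y s \<omega> * Y t \<omega>)) t (C * t))))
       \<and>
         (\<forall>(M :: 'a measure) Y.
            prob_space M \<and> centered_gaussian_process M {0..1} Y \<and>
            (AE \<omega> in M. \<exists>v. has_badic_pvar b p (\<lambda>t. Y t \<omega>) 1 v)
            \<longrightarrow> (\<forall>s\<in>{0..1}.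
                  limsup (\<lambda>n. ereal (\<Sum>k<b ^ n.
                     \<bar>integral\<^sup>L M (\<lambda>\<omega>. Y s \<omega> * Y (real (Suc k) / real b ^ n) \<omega>)
                      - integral\<^sup>L M (\<lambda>\<omega>. Y s \<omega> * Y (real k / real b ^ n) \<omega>)\<bar> powr p)) < \<infinity>))"
proof (intro conjI allI impI ballI)
  show "\<exists>(M :: (nat \<Rightarrow> real) measure) Y V.
            prob_space M \<and> centered_gaussian_process M {0..1} Y \<and>
            V \<in> borel_measurable M \<and>
            (AE \<omega> in M. 0 < V \<omega> \<and>
               (\<forall>t\<in>{0..1}. has_badic_pvar b p (\<lambda>t. Y t \<omega>) t (V \<omega> * t))) \<and>
            (\<forall>s\<in>{0<..<1}. \<exists>C. 0 < C \<and>
               (\<forall>t\<in>{0..1}. has_badic_pvar b p (\<lambda>t. integral\<^sup>L M (\<lambda>\<omega>. Y s \<omega> * Y t \<omega>)) t (C * t)))"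
    by (rule part_a[OF assms])
next
  fix M :: "'a measure" and Y :: "real \<Rightarrow> 'a \<Rightarrow> real" and s :: real
  assume H: "prob_space M \<and> centered_gaussian_process M {0..1} Y \<and>
            (AE \<omega> in M. \<exists>v. has_badic_pvar b p (\<lambda>t. Y t \<omega>) 1 v)" and s: "s \<in> {0..1}"
  show "limsup (\<lambda>n. ereal (\<Sum>k<b ^ n.
                     \<bar>integral\<^sup>L M (\<lambda>\<omega>. Y s \<omega> * Y (real (Suc k) / real b ^ n) \<omega>)
                      - integral\<^sup>L M (\<lambda>\<omega>. Y s \<omega> * Y (real k / real b ^ n) \<omega>)\<bar> powr p)) < \<infinity>"
    using part_b[of M Y b p s] H s assms by blast
qed


end
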